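(* Let $s\ge1$ and let $F$ be a distribution function on $\mathbb{R}^s$ with $\int_{\mathbb{R}^s}|x|^2dF(x)<\infty$. For $n\ge1$ let $V_n$ be the covariance matrix of the Pitman estimator of $\theta\in\mathbb{R}^s$ from a sample of size $n$ from $F(x-\theta)$. Then for all $n\ge1$, $$nV_n\ \ge\ (n+1)V_{n+1},$$ i.e. $nV_n-(n+1)V_{n+1}$ is nonnegative definite.
   Context: A sample of size $n$ from $F(x-\theta)$ is $x_1,\ldots,x_n$ i.i.d. in $\mathbb{R}^s$ with $x_i-\theta\sim F$. An estimator $t$ is equivariant if $t(x_1+c,\ldots,x_n+c)=t(x_1,\ldots,x_n)+c$ for all $c\in\mathbb{R}^s$. The Pitman estimator is the equivariant estimator whose covariance matrix is minimal in the Loewner order (nonnegative definite difference) among equivariant estimators; it equals $\bar x-E_0(\bar x\mid x_1-\bar x,\ldots,x_n-\bar x)$, with $E_0$ expectation under $\theta=0$. *)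

theory Defs
  imports "HOL-Probability.Probability"
begin

definition sample_meas :: "(real^'s) measure \<Rightarrow> real^'s \<Rightarrow> nat \<Rightarrow> (nat \<Rightarrow> real^'s) measure" where
  "sample_meas F \<theta> n = PiM {..<n} (\<lambda>_. distr F borel (\<lambda>x. x + \<theta>))"

definition sample_mean :: "nat \<Rightarrow> (nat \<Rightarrow> real^'s) \<Rightarrow> real^'s" where
  "sample_mean n x = (1 / real n) *\<^sub>R (\<Sum>i<n. x i)"

definition residuals :: "nat \<Rightarrow> (nat \<Rightarrow> real^'s) \<Rightarrow> (nat \<Rightarrow> real^'s)" where
  "residuals n x = (\<lambda>i\<in>{..<n}. x i - sample_mean n x)"

definition residual_algebra :: "(real^'s) measure \<Rightarrow> nat \<Rightarrow> (nat \<Rightarrow> real^'s) measure" where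
  "residual_algebra F n =
     vimage_algebra (space (sample_meas F 0 n)) (residuals n) (PiM {..<n} (\<lambda>_. borel))"

definition pitman :: "(real^'s) measure \<Rightarrow> nat \<Rightarrow> (nat \<Rightarrow> real^'s) \<Rightarrow> real^'s" where
  "pitman F n x = sample_mean n x -
     (\<chi> j. real_cond_exp (sample_meas F 0 n) (residual_algebra F n) (\<lambda>y. sample_mean n y $ j) x)"

definition cov_matrix :: "'a measure \<Rightarrow> ('a \<Rightarrow> real^'s) \<Rightarrow> real^'s^'s" where
  "cov_matrix M t = (\<chi> i j. 
      integral\<^sup>L M (\<lambda>x. (t x $ i - integral\<^sup>L M (\<lambda>y. t y $ i)) * (t x $ j - integral\<^sup>L M (\<lambda>y. t y $ j))))"

definition pitman_cov :: "(real^'s) measure \<Rightarrow> real^'s \<Rightarrow> nat \<Rightarrow> real^'s^'s" where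
  "pitman_cov F \<theta> n = cov_matrix (sample_meas F \<theta> n) (pitman F n)"

definition nonneg_definite :: "real^'s^'s \<Rightarrow> bool" where
  "nonneg_definite A \<longleftrightarrow> (\<forall>u. 0 \<le> u \<bullet> (A *v u))"

end

theory Submission
  imports Defs
begin

locale iid =
  fixes P :: "'a measure" and m :: nat
  assumes P: "prob_space P"
begin

abbreviation "\<Omega> \<equiv> PiM {..<m} (\<lambda>_. P)"

lemma PS: "product_prob_space (\<lambda>_. P)"
  by (simp add: P product_prob_spaceI)


lemma prob_Omega: "prob_space \<Omega>"
  by (rule prob_space_PiM) (simp add: P)

lemma OP: "pair_prob_space \<Omega> P"
  by (simp add: pair_prob_space_def pair_sigma_finite_def prob_Omega P prob_space_imp_sigma_finite)

lemma upd_meas: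
  assumes "j < m"
  shows "(\<lambda>z. (fst z)(j := snd z)) \<in> measurable (\<Omega> \<Otimes>\<^sub>M P) \<Omega>"
proof -
  have "(\<lambda>\<omega> i. (if i = j then snd \<omega> else fst \<omega> i)) \<in> measurable (\<Omega> \<Otimes>\<^sub>M P) \<Omega>"
  proof (rule measurable_PiM_single'[where f="\<lambda>i \<omega>. if i = j then snd \<omega> else fst \<omega> i"])
    fix i assume "i \<in> {..<m}"
    show "(\<lambda>\<omega>. if i = j then snd \<omega> else fst \<omega> i) \<in> measurable (\<Omega> \<Otimes>\<^sub>M P) P"
    proof (cases "i = j")
      case True
      have e: "(\<lambda>\<omega>. if i = j then snd \<omega> else fst \<omega> i) = snd" by (rule ext) (simp add: True)
      show ?thesis by (subst e) (rule measurable_snd)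
    next
      case False
      have "(\<lambda>\<omega>. fst \<omega> i) \<in> measurable (\<Omega> \<Otimes>\<^sub>M P) P"
        using \<open>i \<in> {..<m}\<close> by (intro measurable_compose[OF measurable_fst measurable_component_singleton]) auto
      then show ?thesis using False by simp
    qed
  next
    show "(\<lambda>\<omega> i. if i = j then snd \<omega> else fst \<omega> i) \<in> space (\<Omega> \<Otimes>\<^sub>M P) \<rightarrow> (\<Pi>\<^sub>E i\<in>{..<m}. space P)"
    proof
      fix z assume "z \<in> space (\<Omega> \<Otimes>\<^sub>M P)"
      then have "fst z \<in> PiE {..<m} (\<lambda>_. space P)" "snd z \<in> space P"
        by (simp_all add: space_pair_measure mem_Times_iff space_PiM)
      then show "(\<lambda>i. if i = j then snd z else fst z i) \<in> (\<Pi>\<^sub>E i\<in>{..<m}. space P)"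
        using assms unfolding PiE_iff extensional_def by auto
    qed
  qed
  moreover have eq: "(\<lambda>z. (fst z)(j := snd z)) = (\<lambda>\<omega> i. (if i = j then snd \<omega> else fst \<omega> i))"
    by (auto simp: fun_eq_iff)
  ultimately show ?thesis by (simp only: eq)
qed

lemma distr_upd:
  assumes "j < m"
  shows "distr (\<Omega> \<Otimes>\<^sub>M P) \<Omega> (\<lambda>z. (fst z)(j := snd z)) = \<Omega>"
proof (rule product_sigma_finite.PiM_eqI)
  interpret PP: product_prob_space "\<lambda>_. P" by (rule PS)
  interpret OP: pair_prob_space \<Omega> P by (rule OP)
  show "product_sigma_finite (\<lambda>_. P)" by unfold_locales
  show "finite {..<m}" by simp
  show "sets (distr (\<Omega> \<Otimes>\<^sub>M P) \<Omega> (\<lambda>z. (fst z)(j := snd z))) = sets \<Omega>" by simp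
  fix A assume A: "\<And>i. i \<in> {..<m} \<Longrightarrow> A i \<in> sets P"
  define B where "B = (\<lambda>i. if i = j then space P else A i)"
  have B: "\<And>i. i \<in> {..<m} \<Longrightarrow> B i \<in> sets P" using A by (auto simp: B_def)
  have AS: "\<And>i. i < m \<Longrightarrow> A i \<subseteq> space P" using A sets.sets_into_space by blast
  have "(\<lambda>z. (fst z)(j := snd z)) -` Pi\<^sub>E {..<m} A \<inter> space (\<Omega> \<Otimes>\<^sub>M P) = Pi\<^sub>E {..<m} B \<times> A j"
  proof (intro set_eqI iffI)
    fix z assume z: "z \<in> (\<lambda>z. (fst z)(j := snd z)) -` Pi\<^sub>E {..<m} A \<inter> space (\<Omega> \<Otimes>\<^sub>M P)"
    obtain x y where xy: "z = (x, y)" by force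
    have "x \<in> PiE {..<m} (\<lambda>_. space P)" "y \<in> space P" "x(j:=y) \<in> Pi\<^sub>E {..<m} A"
      using z by (simp_all add: xy space_pair_measure mem_Times_iff space_PiM)
    then have x1: "\<forall>i<m. x i \<in> space P" and x2: "x \<in> extensional {..<m}" and y: "y \<in> space P"
      and x3: "\<forall>i<m. (x(j:=y)) i \<in> A i"
      by (simp_all add: PiE_iff)
    have "x \<in> Pi\<^sub>E {..<m} B"
      unfolding PiE_iff
    proof (intro conjI ballI x2)
      fix i assume "i \<in> {..<m}"
      have a: "x i \<in> space P" "(x(j:=y)) i \<in> A i" using x1 x3 \<open>i \<in> {..<m}\<close> by auto
      then show "x i \<in> B i" by (cases "i = j") (simp_all add: B_def)
    qed
    moreover have "y \<in> A j" using x3 assms by (metis fun_upd_same)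
    ultimately show "z \<in> Pi\<^sub>E {..<m} B \<times> A j" by (simp add: xy)
  next
    fix z assume z: "z \<in> Pi\<^sub>E {..<m} B \<times> A j"
    obtain x y where xy: "z = (x, y)" by force
    have x: "x \<in> Pi\<^sub>E {..<m} B" and y: "y \<in> A j" using z xy by auto
    have xi: "x i \<in> A i" if "i < m" "i \<noteq> j" for i using PiE_mem[OF x, of i] that by (simp add: B_def)
    have xs: "x i \<in> space P" if "i < m" for i
    proof (cases "i = j")
      case True then show ?thesis using PiE_mem[OF x, of i] that by (simp add: B_def)
    next
      case False then show ?thesis using xi AS that by blast
    qed
    have xe: "x \<in> extensional {..<m}" using x by (simp add: PiE_iff)
    have "x \<in> PiE {..<m} (\<lambda>_. space P)" using xs xe by (simp add: PiE_iff)
    moreover have "y \<in> space P" using y AS assms by auto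
    moreover have "x(j:=y) \<in> Pi\<^sub>E {..<m} A" using xi xe y assms unfolding PiE_iff
      by (auto simp: extensional_def)
    ultimately show "z \<in> (\<lambda>z. (fst z)(j := snd z)) -` Pi\<^sub>E {..<m} A \<inter> space (\<Omega> \<Otimes>\<^sub>M P)"
      by (simp add: xy space_pair_measure mem_Times_iff space_PiM)
  qed
  moreover have "Pi\<^sub>E {..<m} A \<in> sets \<Omega>" using A by (auto intro: sets_PiM_I_finite)
  moreover have PB: "Pi\<^sub>E {..<m} B \<in> sets \<Omega>" using B by (auto intro: sets_PiM_I_finite)
  ultimately have "emeasure (distr (\<Omega> \<Otimes>\<^sub>M P) \<Omega> (\<lambda>z. (fst z)(j := snd z))) (Pi\<^sub>E {..<m} A)
     = emeasure (\<Omega> \<Otimes>\<^sub>M P) (Pi\<^sub>E {..<m} B \<times> A j)"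
    using A assms by (simp add: emeasure_distr upd_meas)
  also have "\<dots> = emeasure \<Omega> (Pi\<^sub>E {..<m} B) * emeasure P (A j)"
    by (rule sigma_finite_measure.emeasure_pair_measure_Times[OF prob_space_imp_sigma_finite[OF P]]) (use PB A assms in auto)
  also have "\<dots> = (\<Prod>i\<in>{..<m}. emeasure P (B i)) * emeasure P (A j)"
    using B by (subst PP.emeasure_PiM) auto
  also have "\<dots> = (\<Prod>i\<in>{..<m}. emeasure P (A i))"
  proof -
    have "(\<Prod>i\<in>{..<m}. emeasure P (B i)) = emeasure P (B j) * (\<Prod>i\<in>{..<m}-{j}. emeasure P (B i))"
      using assms by (simp add: prod.remove)
    moreover have "(\<Prod>i\<in>{..<m}. emeasure P (A i)) = emeasure P (A j) * (\<Prod>i\<in>{..<m}-{j}. emeasure P (A i))"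
      using assms by (simp add: prod.remove)
    moreover have "(\<Prod>i\<in>{..<m}-{j}. emeasure P (B i)) = (\<Prod>i\<in>{..<m}-{j}. emeasure P (A i))"
      by (auto simp: B_def intro!: prod.cong)
    ultimately show ?thesis by (simp add: B_def prob_space.emeasure_space_1[OF P] mult.commute)
  qed
  finally show "emeasure (distr (\<Omega> \<Otimes>\<^sub>M P) \<Omega> (\<lambda>z. (fst z)(j := snd z))) (Pi\<^sub>E {..<m} A) = (\<Prod>i\<in>{..<m}. emeasure P (A i))" .
qed

end

definition L2 :: "'b measure \<Rightarrow> ('b \<Rightarrow> real) \<Rightarrow> bool" where
  "L2 M f \<longleftrightarrow> f \<in> borel_measurable M \<and> integrable M (\<lambda>x. (f x)\<^sup>2)"

lemma L2_meas: "L2 M f \<Longrightarrow> f \<in> borel_measurable M" by (simp add: L2_def)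
lemma L2_sq: "L2 M f \<Longrightarrow> integrable M (\<lambda>x. (f x)\<^sup>2)" by (simp add: L2_def)

lemma L2_mult:
  fixes f g :: "'b \<Rightarrow> real"
  assumes "L2 M f" "L2 M g"
  shows "integrable M (\<lambda>x. f x * g x)"
proof (rule Bochner_Integration.integrable_bound[of _ "\<lambda>x. (f x)\<^sup>2 + (g x)\<^sup>2"])
  show "integrable M (\<lambda>x. (f x)\<^sup>2 + (g x)\<^sup>2)" using assms by (simp add: L2_def)
  show "(\<lambda>x. f x * g x) \<in> borel_measurable M" using assms unfolding L2_def by (auto intro: borel_measurable_times)
  show "AE x in M. norm (f x * g x) \<le> norm ((f x)\<^sup>2 + (g x)\<^sup>2)"
  proof (rule AE_I2)
    fix x
    have "2 * \<bar>f x * g x\<bar> \<le> (f x)\<^sup>2 + (g x)\<^sup>2"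
      using sum_squares_bound[of "\<bar>f x\<bar>" "\<bar>g x\<bar>"] by (simp add: abs_mult power2_abs)
    moreover have "0 \<le> (f x)\<^sup>2 + (g x)\<^sup>2" by simp
    ultimately show "norm (f x * g x) \<le> norm ((f x)\<^sup>2 + (g x)\<^sup>2)" by simp
  qed
qed

lemma L2_add: fixes f g :: "'b \<Rightarrow> real" shows "L2 M f \<Longrightarrow> L2 M g \<Longrightarrow> L2 M (\<lambda>x. f x + g x)"
proof -
  assume a: "L2 M f" "L2 M g"
  have "integrable M (\<lambda>x. (f x)\<^sup>2 + 2 * (f x * g x) + (g x)\<^sup>2)"
    using a L2_mult[OF a] by (simp add: L2_def)
  moreover have "(\<lambda>x. f x + g x) \<in> borel_measurable M" using a unfolding L2_def by (auto intro: borel_measurable_add)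
  ultimately show ?thesis by (simp add: L2_def power2_sum ac_simps)
qed

lemma L2_cmult: "L2 M f \<Longrightarrow> L2 M (\<lambda>x. c * f x)"
  unfolding L2_def by (auto simp: power_mult_distrib)

lemma L2_uminus: "L2 M f \<Longrightarrow> L2 M (\<lambda>x. - f x)"
  by (simp add: L2_def)

lemma L2_diff: "L2 M f \<Longrightarrow> L2 M g \<Longrightarrow> L2 M (\<lambda>x. f x - g x)"
  using L2_add[of M f "\<lambda>x. - g x"] L2_uminus[of M g] by simp

lemma L2_const: "finite_measure M \<Longrightarrow> L2 M (\<lambda>x. c)"
  by (simp add: L2_def finite_measure.integrable_const)

lemma L2_sum: "finite_measure M \<Longrightarrow> (\<And>i. i \<in> I \<Longrightarrow> L2 M (f i)) \<Longrightarrow> L2 M (\<lambda>x. \<Sum>i\<in>I. f i x)"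
proof (induction I rule: infinite_finite_induct)
  case (infinite A) then show ?case by (simp add: L2_const)
next
  case empty then show ?case by (simp add: L2_const)
next
  case (insert i I)
  then show ?case by (simp add: L2_add)
qed

lemma L2_int: "finite_measure M \<Longrightarrow> L2 M f \<Longrightarrow> integrable M f"
  by (rule finite_measure.square_integrable_imp_integrable) (simp_all add: L2_def)

lemma L2_cong: "L2 M f \<Longrightarrow> (\<And>x. x \<in> space M \<Longrightarrow> f x = g x) \<Longrightarrow> L2 M g"
  unfolding L2_def
  by (metis (no_types, lifting) Bochner_Integration.integrable_cong measurable_cong)

lemma prob_jensen_sq:
  fixes h :: "'b \<Rightarrow> real"
  assumes "prob_space M" "integrable M h" "integrable M (\<lambda>x. (h x)\<^sup>2)"
  shows "(\<integral>x. h x \<partial>M)\<^sup>2 \<le> (\<integral>x. (h x)\<^sup>2 \<partial>M)"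
  using prob_space.variance_eq[OF assms] prob_space.variance_positive[OF assms(1), of h] by simp

context iid
begin

definition Ej :: "nat \<Rightarrow> ((nat \<Rightarrow> 'a) \<Rightarrow> real) \<Rightarrow> (nat \<Rightarrow> 'a) \<Rightarrow> real" where
  "Ej j f x = (\<integral>y. f (x(j := y)) \<partial>P)"

definition invar :: "nat \<Rightarrow> ((nat \<Rightarrow> 'a) \<Rightarrow> real) \<Rightarrow> bool" where
  "invar j f \<longleftrightarrow> (\<forall>x y. f (x(j := y)) = f x)"

lemma comp_meas:
  fixes f :: "(nat \<Rightarrow> 'a) \<Rightarrow> real"
  assumes "j < m" "f \<in> borel_measurable \<Omega>"
  shows "(\<lambda>z. f ((fst z)(j := snd z))) \<in> borel_measurable (\<Omega> \<Otimes>\<^sub>M P)"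
  using measurable_compose[OF upd_meas[OF assms(1)] assms(2)] .

lemma comp_int:
  fixes f :: "(nat \<Rightarrow> 'a) \<Rightarrow> real"
  assumes "j < m" "integrable \<Omega> f"
  shows "integrable (\<Omega> \<Otimes>\<^sub>M P) (\<lambda>z. f ((fst z)(j := snd z)))"
proof -
  have "integrable (distr (\<Omega> \<Otimes>\<^sub>M P) \<Omega> (\<lambda>z. (fst z)(j := snd z))) f"
    using assms by (simp add: distr_upd)
  then show ?thesis
    using integrable_distr_eq[OF upd_meas[OF assms(1)] borel_measurable_integrable[OF assms(2)]] by simp
qed

lemma comp_integral:
  fixes f :: "(nat \<Rightarrow> 'a) \<Rightarrow> real"
  assumes "j < m" "f \<in> borel_measurable \<Omega>"
  shows "(\<integral>z. f ((fst z)(j := snd z)) \<partial>(\<Omega> \<Otimes>\<^sub>M P)) = (\<integral>x. f x \<partial>\<Omega>)"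
proof -
  have "(\<integral>x. f x \<partial>\<Omega>) = (\<integral>x. f x \<partial>(distr (\<Omega> \<Otimes>\<^sub>M P) \<Omega> (\<lambda>z. (fst z)(j := snd z))))"
    using assms by (simp add: distr_upd)
  also have "\<dots> = (\<integral>z. f ((fst z)(j := snd z)) \<partial>(\<Omega> \<Otimes>\<^sub>M P))"
    by (rule integral_distr[OF upd_meas[OF assms(1)] assms(2)])
  finally show ?thesis by simp
qed

lemma Ej_meas:
  fixes f :: "(nat \<Rightarrow> 'a) \<Rightarrow> real"
  assumes "j < m" "f \<in> borel_measurable \<Omega>"
  shows "Ej j f \<in> borel_measurable \<Omega>"
proof -
  have "(\<lambda>x. \<integral>y. f (x(j := y)) \<partial>P) \<in> borel_measurable \<Omega>"
  proof (rule sigma_finite_measure.borel_measurable_lebesgue_integral[OF prob_space_imp_sigma_finite[OF P]])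
    have "case_prod (\<lambda>x y. f (x(j := y))) = (\<lambda>z. f ((fst z)(j := snd z)))" by (rule ext) (simp add: split_beta)
    then show "case_prod (\<lambda>x y. f (x(j := y))) \<in> borel_measurable (\<Omega> \<Otimes>\<^sub>M P)"
      using comp_meas[OF assms] by simp
  qed
  then show ?thesis by (simp add: Ej_def[abs_def])
qed

lemma Ej_int:
  fixes f :: "(nat \<Rightarrow> 'a) \<Rightarrow> real"
  assumes "j < m" "integrable \<Omega> f"
  shows "integrable \<Omega> (Ej j f)" "(\<integral>x. Ej j f x \<partial>\<Omega>) = (\<integral>x. f x \<partial>\<Omega>)"
proof -
  interpret OP: pair_prob_space \<Omega> P by (rule OP)
  have i: "integrable (\<Omega> \<Otimes>\<^sub>M P) (\<lambda>z. f ((fst z)(j := snd z)))" by (rule comp_int[OF assms])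
  show "integrable \<Omega> (Ej j f)"
    using OP.integrable_fst'[OF i] by (simp add: Ej_def[abs_def])
  show "(\<integral>x. Ej j f x \<partial>\<Omega>) = (\<integral>x. f x \<partial>\<Omega>)"
    using OP.integral_fst'[OF i] comp_integral[OF assms(1) borel_measurable_integrable[OF assms(2)]]
    by (simp add: Ej_def[abs_def])
qed

lemma Ej_AE_int:
  fixes f :: "(nat \<Rightarrow> 'a) \<Rightarrow> real"
  assumes "j < m" "integrable \<Omega> f"
  shows "AE x in \<Omega>. integrable P (\<lambda>y. f (x(j := y)))"
proof -
  interpret OP: pair_prob_space \<Omega> P by (rule OP)
  show ?thesis using OP.AE_integrable_fst'[OF comp_int[OF assms]] by simp
qed

lemma Ej_L2:
  fixes f :: "(nat \<Rightarrow> 'a) \<Rightarrow> real"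
  assumes "j < m" "L2 \<Omega> f"
  shows "L2 \<Omega> (Ej j f)" "(\<integral>x. (Ej j f x)\<^sup>2 \<partial>\<Omega>) \<le> (\<integral>x. (f x)\<^sup>2 \<partial>\<Omega>)"
proof -
  have fm: "f \<in> borel_measurable \<Omega>" using assms by (simp add: L2_def)
  have fi: "integrable \<Omega> f" by (rule L2_int[OF prob_space.finite_measure[OF prob_Omega] assms(2)])
  have f2: "integrable \<Omega> (\<lambda>x. (f x)\<^sup>2)" using assms by (simp add: L2_def)
  have m1: "Ej j f \<in> borel_measurable \<Omega>" by (rule Ej_meas[OF assms(1) fm])
  have ae: "AE x in \<Omega>. (Ej j f x)\<^sup>2 \<le> Ej j (\<lambda>x. (f x)\<^sup>2) x"
    using Ej_AE_int[OF assms(1) fi] Ej_AE_int[OF assms(1) f2]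
  proof eventually_elim
    case (elim x)
    then show ?case unfolding Ej_def by (intro prob_jensen_sq[OF P]) auto
  qed
  have i2: "integrable \<Omega> (Ej j (\<lambda>x. (f x)\<^sup>2))" by (rule Ej_int[OF assms(1) f2])
  have sq_int: "integrable \<Omega> (\<lambda>x. (Ej j f x)\<^sup>2)"
  proof (rule Bochner_Integration.integrable_bound[OF i2])
    show "(\<lambda>x. (Ej j f x)\<^sup>2) \<in> borel_measurable \<Omega>" using m1 by simp
    show "AE x in \<Omega>. norm ((Ej j f x)\<^sup>2) \<le> norm (Ej j (\<lambda>x. (f x)\<^sup>2) x)"
      using ae by eventually_elim auto
  qed
  then show "L2 \<Omega> (Ej j f)" using m1 by (simp add: L2_def)
  have "(\<integral>x. (Ej j f x)\<^sup>2 \<partial>\<Omega>) \<le> (\<integral>x. Ej j (\<lambda>x. (f x)\<^sup>2) x \<partial>\<Omega>)"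
    by (rule integral_mono_AE[OF sq_int i2 ae])
  also have "\<dots> = (\<integral>x. (f x)\<^sup>2 \<partial>\<Omega>)" by (rule Ej_int[OF assms(1) f2])
  finally show "(\<integral>x. (Ej j f x)\<^sup>2 \<partial>\<Omega>) \<le> (\<integral>x. (f x)\<^sup>2 \<partial>\<Omega>)" .
qed

lemma Ej_mult: "invar j g \<Longrightarrow> Ej j (\<lambda>x. g x * f x) x = g x * Ej j f x"
  unfolding Ej_def invar_def by simp

lemma Ej_invar_self: "invar j (Ej j f)"
  unfolding Ej_def invar_def by simp

lemma Ej_invar_other: "k \<noteq> j \<Longrightarrow> invar k f \<Longrightarrow> invar k (Ej j f)"
  unfolding Ej_def invar_def by (simp add: fun_upd_twist)

lemma Ej_orth:
  fixes f :: "(nat \<Rightarrow> 'a) \<Rightarrow> real"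
  assumes "j < m" "L2 \<Omega> f" "L2 \<Omega> h" "invar j h"
  shows "(\<integral>x. Ej j f x * h x \<partial>\<Omega>) = (\<integral>x. f x * h x \<partial>\<Omega>)"
proof -
  have i: "integrable \<Omega> (\<lambda>x. h x * f x)" by (rule L2_mult[OF assms(3,2)])
  have "(\<integral>x. f x * h x \<partial>\<Omega>) = (\<integral>x. h x * f x \<partial>\<Omega>)" by (simp add: mult.commute)
  also have "\<dots> = (\<integral>x. Ej j (\<lambda>x. h x * f x) x \<partial>\<Omega>)" using Ej_int(2)[OF assms(1) i] by simp
  also have "\<dots> = (\<integral>x. Ej j f x * h x \<partial>\<Omega>)"
    using Ej_mult[OF assms(4), of f] by (simp add: mult.commute)
  finally show ?thesis by simp
qed

lemma Ej_diff:
  fixes f :: "(nat \<Rightarrow> 'a) \<Rightarrow> real"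
  assumes "j < m" "integrable \<Omega> f" "integrable \<Omega> g"
  shows "AE x in \<Omega>. Ej j (\<lambda>x. f x - g x) x = Ej j f x - Ej j g x"
  using Ej_AE_int[OF assms(1,2)] Ej_AE_int[OF assms(1,3)]
  by eventually_elim (simp add: Ej_def)

end

context iid
begin

definition Efold :: "nat list \<Rightarrow> ((nat \<Rightarrow> 'a) \<Rightarrow> real) \<Rightarrow> (nat \<Rightarrow> 'a) \<Rightarrow> real" where
  "Efold ks f = foldl (\<lambda>g k. Ej k g) f ks"

lemma Efold_Nil[simp]: "Efold [] f = f" by (simp add: Efold_def)
lemma Efold_Cons[simp]: "Efold (k # ks) f = Efold ks (Ej k f)" by (simp add: Efold_def)

lemma finO: "finite_measure \<Omega>" by (rule prob_space.finite_measure[OF prob_Omega])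

lemma Efold_L2:
  fixes f :: "(nat \<Rightarrow> 'a) \<Rightarrow> real"
  assumes "set ks \<subseteq> {..<m}" "L2 \<Omega> f"
  shows "L2 \<Omega> (Efold ks f) \<and> (\<integral>x. Efold ks f x \<partial>\<Omega>) = (\<integral>x. f x \<partial>\<Omega>)"
  using assms
proof (induction ks arbitrary: f)
  case Nil then show ?case by simp
next
  case (Cons k ks)
  have k: "k < m" using Cons.prems by auto
  have g: "L2 \<Omega> (Ej k f)" by (rule Ej_L2(1)[OF k Cons.prems(2)])
  have "(\<integral>x. Ej k f x \<partial>\<Omega>) = (\<integral>x. f x \<partial>\<Omega>)" by (rule Ej_int(2)[OF k L2_int[OF finO Cons.prems(2)]])
  then show ?case using Cons.IH[OF _ g] Cons.prems by simp
qed

lemma sq_split: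
  fixes a b :: "(nat \<Rightarrow> 'a) \<Rightarrow> real"
  assumes "L2 \<Omega> a" "L2 \<Omega> b"
  shows "(\<integral>x. (a x + b x)\<^sup>2 \<partial>\<Omega>) = (\<integral>x. (a x)\<^sup>2 \<partial>\<Omega>) + 2 * (\<integral>x. a x * b x \<partial>\<Omega>) + (\<integral>x. (b x)\<^sup>2 \<partial>\<Omega>)"
proof -
  have i1: "integrable \<Omega> (\<lambda>x. (a x)\<^sup>2)" "integrable \<Omega> (\<lambda>x. (b x)\<^sup>2)" using assms by (simp_all add: L2_def)
  have i2: "integrable \<Omega> (\<lambda>x. 2 * (a x * b x))" using L2_mult[OF assms] by simp
  have "(\<integral>x. (a x + b x)\<^sup>2 \<partial>\<Omega>) = (\<integral>x. (a x)\<^sup>2 + 2 * (a x * b x) + (b x)\<^sup>2 \<partial>\<Omega>)"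
    by (simp add: power2_sum ac_simps)
  also have "\<dots> = (\<integral>x. (a x)\<^sup>2 \<partial>\<Omega>) + (\<integral>x. 2 * (a x * b x) \<partial>\<Omega>) + (\<integral>x. (b x)\<^sup>2 \<partial>\<Omega>)"
    using i1 i2 by simp
  finally show ?thesis by simp
qed

lemma ES_list:
  fixes f :: "(nat \<Rightarrow> 'a) \<Rightarrow> real"
  assumes "distinct ks" "set ks \<subseteq> {..<m}" "L2 \<Omega> f"
  shows "(\<Sum>j\<in>set ks. (\<integral>x. (Ej j f x)\<^sup>2 \<partial>\<Omega>)) \<le> (real (length ks) - 1) * (\<integral>x. (f x)\<^sup>2 \<partial>\<Omega>) + (\<integral>x. (Efold ks f x)\<^sup>2 \<partial>\<Omega>)"
  using assms
proof (induction ks arbitrary: f)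
  case Nil then show ?case by simp
next
  case (Cons k ks)
  have k: "k < m" and kn: "k \<notin> set ks" and ks: "set ks \<subseteq> {..<m}" "distinct ks" using Cons.prems by auto
  have fL: "L2 \<Omega> f" by (rule Cons.prems(3))
  define g where "g = Ej k f"
  define d where "d = (\<lambda>x. f x - g x)"
  have gL: "L2 \<Omega> g" unfolding g_def by (rule Ej_L2(1)[OF k fL])
  have dL: "L2 \<Omega> d" unfolding d_def by (rule L2_diff[OF fL gL])
  have fi: "integrable \<Omega> f" "integrable \<Omega> g" "integrable \<Omega> d" using L2_int[OF finO] fL gL dL by auto
  have gk: "invar k g" unfolding g_def by (rule Ej_invar_self)
  have fgd: "\<And>x. f x = g x + d x" by (simp add: d_def)
  have gg: "(\<integral>x. g x * g x \<partial>\<Omega>) = (\<integral>x. f x * g x \<partial>\<Omega>)"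
    using Ej_orth[OF k fL gL gk] by (simp add: g_def)
  have gd0: "(\<integral>x. g x * d x \<partial>\<Omega>) = 0"
  proof -
    have "(\<integral>x. g x * d x \<partial>\<Omega>) = (\<integral>x. f x * g x - g x * g x \<partial>\<Omega>)"
      by (simp add: d_def algebra_simps)
    also have "\<dots> = (\<integral>x. f x * g x \<partial>\<Omega>) - (\<integral>x. g x * g x \<partial>\<Omega>)"
      using L2_mult[OF fL gL] L2_mult[OF gL gL] by simp
    finally show ?thesis using gg by simp
  qed
  have fsq: "(\<integral>x. (f x)\<^sup>2 \<partial>\<Omega>) = (\<integral>x. (g x)\<^sup>2 \<partial>\<Omega>) + (\<integral>x. (d x)\<^sup>2 \<partial>\<Omega>)"
    using sq_split[OF gL dL] gd0 by (simp add: fgd[symmetric])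
  have step: "(\<integral>x. (Ej j f x)\<^sup>2 \<partial>\<Omega>) \<le> (\<integral>x. (Ej j g x)\<^sup>2 \<partial>\<Omega>) + (\<integral>x. (d x)\<^sup>2 \<partial>\<Omega>)"
    if j: "j \<in> set ks" for j
  proof -
    have jm: "j < m" and jk: "j \<noteq> k" using j ks kn by auto
    have EgL: "L2 \<Omega> (Ej j g)" by (rule Ej_L2(1)[OF jm gL])
    have EdL: "L2 \<Omega> (Ej j d)" by (rule Ej_L2(1)[OF jm dL])
    have EfL: "L2 \<Omega> (Ej j f)" by (rule Ej_L2(1)[OF jm fL])
    have ae: "AE x in \<Omega>. Ej j f x = Ej j g x + Ej j d x"
      using Ej_diff[OF jm fi(1) fi(2)] by eventually_elim (simp add: d_def)
    have "(\<integral>x. (Ej j f x)\<^sup>2 \<partial>\<Omega>) = (\<integral>x. (Ej j g x + Ej j d x)\<^sup>2 \<partial>\<Omega>)"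
    proof (rule integral_cong_AE)
      show "(\<lambda>x. (Ej j f x)\<^sup>2) \<in> borel_measurable \<Omega>" using L2_sq[OF EfL] by (rule borel_measurable_integrable)
      show "(\<lambda>x. (Ej j g x + Ej j d x)\<^sup>2) \<in> borel_measurable \<Omega>" using L2_sq[OF L2_add[OF EgL EdL]] by (rule borel_measurable_integrable)
      show "AE x in \<Omega>. (Ej j f x)\<^sup>2 = (Ej j g x + Ej j d x)\<^sup>2" using ae by eventually_elim simp
    qed
    also have "\<dots> = (\<integral>x. (Ej j g x)\<^sup>2 \<partial>\<Omega>) + 2 * (\<integral>x. Ej j g x * Ej j d x \<partial>\<Omega>) + (\<integral>x. (Ej j d x)\<^sup>2 \<partial>\<Omega>)"
      by (rule sq_split[OF EgL EdL])
    also have "(\<integral>x. Ej j g x * Ej j d x \<partial>\<Omega>) = 0"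
    proof -
      have inj: "invar j (Ej j g)" by (rule Ej_invar_self)
      have ink: "invar k (Ej j g)" by (rule Ej_invar_other[OF jk[symmetric] gk])
      have "(\<integral>x. Ej j g x * Ej j d x \<partial>\<Omega>) = (\<integral>x. Ej j d x * Ej j g x \<partial>\<Omega>)" by (simp add: mult.commute)
      also have "\<dots> = (\<integral>x. d x * Ej j g x \<partial>\<Omega>)" by (rule Ej_orth[OF jm dL EgL inj])
      also have "\<dots> = (\<integral>x. f x * Ej j g x - g x * Ej j g x \<partial>\<Omega>)" by (simp add: d_def algebra_simps)
      also have "\<dots> = (\<integral>x. f x * Ej j g x \<partial>\<Omega>) - (\<integral>x. g x * Ej j g x \<partial>\<Omega>)"
        using L2_mult[OF fL EgL] L2_mult[OF gL EgL] by simp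
      also have "(\<integral>x. g x * Ej j g x \<partial>\<Omega>) = (\<integral>x. f x * Ej j g x \<partial>\<Omega>)"
        unfolding g_def by (rule Ej_orth[OF k fL EgL[unfolded g_def] ink[unfolded g_def]])
      finally show ?thesis by simp
    qed
    also have "(\<integral>x. (Ej j d x)\<^sup>2 \<partial>\<Omega>) \<le> (\<integral>x. (d x)\<^sup>2 \<partial>\<Omega>)" by (rule Ej_L2(2)[OF jm dL])
    finally show ?thesis by simp
  qed
  have IH: "(\<Sum>j\<in>set ks. (\<integral>x. (Ej j g x)\<^sup>2 \<partial>\<Omega>)) \<le> (real (length ks) - 1) * (\<integral>x. (g x)\<^sup>2 \<partial>\<Omega>) + (\<integral>x. (Efold ks g x)\<^sup>2 \<partial>\<Omega>)"
    by (rule Cons.IH[OF ks(2) ks(1) gL])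
  have "(\<Sum>j\<in>set (k # ks). (\<integral>x. (Ej j f x)\<^sup>2 \<partial>\<Omega>)) = (\<integral>x. (g x)\<^sup>2 \<partial>\<Omega>) + (\<Sum>j\<in>set ks. (\<integral>x. (Ej j f x)\<^sup>2 \<partial>\<Omega>))"
    using kn by (simp add: g_def)
  also have "\<dots> \<le> (\<integral>x. (g x)\<^sup>2 \<partial>\<Omega>) + (\<Sum>j\<in>set ks. (\<integral>x. (Ej j g x)\<^sup>2 \<partial>\<Omega>) + (\<integral>x. (d x)\<^sup>2 \<partial>\<Omega>))"
    using step by (intro add_left_mono sum_mono) auto
  also have "\<dots> = (\<integral>x. (g x)\<^sup>2 \<partial>\<Omega>) + (\<Sum>j\<in>set ks. (\<integral>x. (Ej j g x)\<^sup>2 \<partial>\<Omega>)) + real (length ks) * (\<integral>x. (d x)\<^sup>2 \<partial>\<Omega>)"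
    using ks(2) by (simp add: sum.distrib distinct_card)
  also have "\<dots> \<le> (\<integral>x. (g x)\<^sup>2 \<partial>\<Omega>) + ((real (length ks) - 1) * (\<integral>x. (g x)\<^sup>2 \<partial>\<Omega>) + (\<integral>x. (Efold ks g x)\<^sup>2 \<partial>\<Omega>)) + real (length ks) * (\<integral>x. (d x)\<^sup>2 \<partial>\<Omega>)"
    using IH by simp
  also have "\<dots> = (real (length (k # ks)) - 1) * (\<integral>x. (f x)\<^sup>2 \<partial>\<Omega>) + (\<integral>x. (Efold (k # ks) f x)\<^sup>2 \<partial>\<Omega>)"
    by (simp add: fsq g_def algebra_simps)
  finally show ?case .
qed

end

context iid
begin

lemma invar_all_const:
  assumes "\<And>k. invar k h" "x \<in> extensional {..<m}"
  shows "h x = h (\<lambda>_. undefined)"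
proof -
  have "h (\<lambda>k. if k < N then x k else undefined) = h (\<lambda>_. undefined)" for N
  proof (induction N)
    case 0 then show ?case by simp
  next
    case (Suc N)
    have "(\<lambda>k. if k < Suc N then x k else undefined) = (\<lambda>k. if k < N then x k else undefined)(N := x N)"
      by (rule ext) auto
    then show ?case using assms(1)[of N] Suc by (simp add: invar_def)
  qed
  moreover have "(\<lambda>k. if k < m then x k else undefined) = x"
    using assms(2) by (auto simp: extensional_def)
  ultimately show ?thesis by metis
qed

lemma Efold_invar:
  "(\<And>j. j \<notin> set ks \<Longrightarrow> invar j f) \<Longrightarrow> invar j (Efold ks f)"
proof (induction ks arbitrary: f)
  case Nil then show ?case by simp
next
  case (Cons k ks)
  have "invar i (Ej k f)" if "i \<notin> set ks" for i
  proof (cases "i = k")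
    case True then show ?thesis by (simp add: Ej_invar_self)
  next
    case False then show ?thesis using Cons.prems that by (intro Ej_invar_other) auto
  qed
  then show ?case using Cons.IH by simp
qed

lemma ES:
  fixes f :: "(nat \<Rightarrow> 'a) \<Rightarrow> real"
  assumes "distinct ks" "set ks \<subseteq> {..<m}" "L2 \<Omega> f" "\<And>j. j \<notin> set ks \<Longrightarrow> invar j f"
  shows "(\<Sum>j\<in>set ks. (\<integral>x. (Ej j f x)\<^sup>2 \<partial>\<Omega>)) \<le> (real (length ks) - 1) * (\<integral>x. (f x)\<^sup>2 \<partial>\<Omega>) + (\<integral>x. f x \<partial>\<Omega>)\<^sup>2"
proof -
  define c where "c = Efold ks f (\<lambda>_. undefined)"
  have const: "Efold ks f x = c" if "x \<in> space \<Omega>" for x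
  proof -
    have "x \<in> extensional {..<m}" using that by (simp add: space_PiM PiE_iff)
    moreover have inv: "\<And>k. invar k (Efold ks f)" using Efold_invar assms(4) by blast
    ultimately show ?thesis unfolding c_def using invar_all_const by blast
  qed
  have "(\<integral>x. Efold ks f x \<partial>\<Omega>) = (\<integral>x. c \<partial>\<Omega>)" by (rule Bochner_Integration.integral_cong) (simp_all add: const)
  also have "\<dots> = c" using prob_space.prob_space[OF prob_Omega] by simp
  finally have c1: "(\<integral>x. Efold ks f x \<partial>\<Omega>) = c" .
  have c2: "c = (\<integral>x. f x \<partial>\<Omega>)" using Efold_L2[OF assms(2,3)] c1 by simp
  have "(\<integral>x. (Efold ks f x)\<^sup>2 \<partial>\<Omega>) = (\<integral>x. c\<^sup>2 \<partial>\<Omega>)" by (rule Bochner_Integration.integral_cong) (simp_all add: const)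
  also have "\<dots> = c\<^sup>2" using prob_space.prob_space[OF prob_Omega] by simp
  finally have "(\<integral>x. (Efold ks f x)\<^sup>2 \<partial>\<Omega>) = (\<integral>x. f x \<partial>\<Omega>)\<^sup>2" using c2 by simp
  then show ?thesis using ES_list[OF assms(1-3)] by simp
qed

lemma cross:
  fixes h :: "nat \<Rightarrow> (nat \<Rightarrow> 'a) \<Rightarrow> real"
  assumes "i < m" "j < m" "i \<noteq> j" "L2 \<Omega> (h i)" "L2 \<Omega> (h j)" "invar i (h i)" "invar j (h j)"
  shows "(\<integral>x. h i x * h j x \<partial>\<Omega>) = (\<integral>x. Ej j (h i) x * Ej i (h j) x \<partial>\<Omega>)"
proof -
  have L: "L2 \<Omega> (Ej i (h j))" by (rule Ej_L2(1)[OF assms(1,5)])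
  have iv: "invar j (Ej i (h j))" by (rule Ej_invar_other[OF assms(3)[symmetric] assms(7)])
  have "(\<integral>x. h i x * h j x \<partial>\<Omega>) = (\<integral>x. h j x * h i x \<partial>\<Omega>)" by (simp add: mult.commute)
  also have "\<dots> = (\<integral>x. Ej i (h j) x * h i x \<partial>\<Omega>)" by (rule Ej_orth[OF assms(1,5,4,6), symmetric])
  also have "\<dots> = (\<integral>x. h i x * Ej i (h j) x \<partial>\<Omega>)" by (simp add: mult.commute)
  also have "\<dots> = (\<integral>x. Ej j (h i) x * Ej i (h j) x \<partial>\<Omega>)" by (rule Ej_orth[OF assms(2,4) L iv, symmetric])
  finally show ?thesis .
qed

lemma vdrop:
  fixes h :: "nat \<Rightarrow> (nat \<Rightarrow> 'a) \<Rightarrow> real"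
  assumes m2: "2 \<le> m"
    and L: "\<And>i. i < m \<Longrightarrow> L2 \<Omega> (h i)"
    and Z: "\<And>i. i < m \<Longrightarrow> (\<integral>x. h i x \<partial>\<Omega>) = 0"
    and I: "\<And>i j. i < m \<Longrightarrow> (j = i \<or> m \<le> j) \<Longrightarrow> invar j (h i)"
  shows "(\<integral>x. (\<Sum>i<m. h i x)\<^sup>2 \<partial>\<Omega>) \<le> real (m - 1) * (\<Sum>i<m. (\<integral>x. (h i x)\<^sup>2 \<partial>\<Omega>))"
proof -
  define a where "a i j = (\<integral>x. (Ej j (h i) x)\<^sup>2 \<partial>\<Omega>)" for i j
  define b where "b i j = (\<integral>x. h i x * h j x \<partial>\<Omega>)" for i j
  have "(\<integral>x. (\<Sum>i<m. h i x)\<^sup>2 \<partial>\<Omega>) = (\<integral>x. (\<Sum>i<m. \<Sum>j<m. h i x * h j x) \<partial>\<Omega>)"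
    by (simp add: power2_eq_square sum_product)
  also have "\<dots> = (\<Sum>i<m. (\<integral>x. (\<Sum>j<m. h i x * h j x) \<partial>\<Omega>))"
  proof (rule Bochner_Integration.integral_sum)
    fix i assume "i \<in> {..<m}"
    then show "integrable \<Omega> (\<lambda>x. \<Sum>j<m. h i x * h j x)"
      using L2_mult[OF L L] by (intro Bochner_Integration.integrable_sum) auto
  qed
  also have "\<dots> = (\<Sum>i<m. \<Sum>j<m. b i j)"
  proof (rule sum.cong[OF refl])
    fix i assume "i \<in> {..<m}"
    then show "(\<integral>x. (\<Sum>j<m. h i x * h j x) \<partial>\<Omega>) = (\<Sum>j<m. b i j)"
      unfolding b_def using L2_mult[OF L L] by (intro Bochner_Integration.integral_sum) auto
  qed
  also have "\<dots> = (\<Sum>i<m. b i i + (\<Sum>j\<in>{..<m}-{i}. b i j))"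
    by (intro sum.cong refl) (simp add: sum.remove)
  also have "\<dots> \<le> (\<Sum>i<m. b i i + (\<Sum>j\<in>{..<m}-{i}. (a i j + a j i) / 2))"
  proof (intro sum_mono add_left_mono)
    fix i j assume i: "i \<in> {..<m}" and j: "j \<in> {..<m} - {i}"
    have ij: "i < m" "j < m" "i \<noteq> j" using i j by auto
    have "b i j = (\<integral>x. Ej j (h i) x * Ej i (h j) x \<partial>\<Omega>)"
      unfolding b_def using ij L I by (intro cross) auto
    also have "\<dots> \<le> (\<integral>x. ((Ej j (h i) x)\<^sup>2 + (Ej i (h j) x)\<^sup>2) / 2 \<partial>\<Omega>)"
    proof (rule integral_mono)
      show "integrable \<Omega> (\<lambda>x. Ej j (h i) x * Ej i (h j) x)"
        by (rule L2_mult[OF Ej_L2(1)[OF ij(2) L[OF ij(1)]] Ej_L2(1)[OF ij(1) L[OF ij(2)]]])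
      show "integrable \<Omega> (\<lambda>x. ((Ej j (h i) x)\<^sup>2 + (Ej i (h j) x)\<^sup>2) / 2)"
        using L2_sq[OF Ej_L2(1)[OF ij(2) L[OF ij(1)]]] L2_sq[OF Ej_L2(1)[OF ij(1) L[OF ij(2)]]] by simp
      fix x
      show "Ej j (h i) x * Ej i (h j) x \<le> ((Ej j (h i) x)\<^sup>2 + (Ej i (h j) x)\<^sup>2) / 2"
        using sum_squares_bound[of "Ej j (h i) x" "Ej i (h j) x"] by simp
    qed
    also have "\<dots> = (a i j + a j i) / 2"
      unfolding a_def
      using L2_sq[OF Ej_L2(1)[OF ij(2) L[OF ij(1)]]] L2_sq[OF Ej_L2(1)[OF ij(1) L[OF ij(2)]]] by simp
    finally show "b i j \<le> (a i j + a j i) / 2" .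
  qed
  also have "\<dots> = (\<Sum>i<m. b i i) + (\<Sum>i<m. \<Sum>j\<in>{..<m}-{i}. a i j)"
  proof -
    have sw: "(\<Sum>i<m. \<Sum>j\<in>{..<m}-{i}. a j i) = (\<Sum>i<m. \<Sum>j\<in>{..<m}-{i}. a i j)"
    proof -
      have fl: "\<And>i g. (\<Sum>j\<in>{..<m}-{i}. g j) = (\<Sum>j<m. if j \<noteq> i then g j else (0::real))"
      proof -
        fix i and g :: "nat \<Rightarrow> real"
        have e: "{..<m}-{i} = {j \<in> {..<m}. j \<noteq> i}" by blast
        have "(\<Sum>j\<in>{j \<in> {..<m}. j \<noteq> i}. g j) = (\<Sum>j<m. if j \<noteq> i then g j else (0::real))"
          by (rule sum.inter_filter) simp
        then show "(\<Sum>j\<in>{..<m}-{i}. g j) = (\<Sum>j<m. if j \<noteq> i then g j else (0::real))"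
          by (simp only: e)
      qed
      have "(\<Sum>i<m. \<Sum>j\<in>{..<m}-{i}. a j i) = (\<Sum>i<m. \<Sum>j<m. if j \<noteq> i then a j i else 0)"
        by (simp only: fl)
      also have "\<dots> = (\<Sum>j<m. \<Sum>i<m. if j \<noteq> i then a j i else 0)" by (rule sum.swap)
      also have "\<dots> = (\<Sum>j<m. \<Sum>i<m. if i \<noteq> j then a j i else 0)"
        by (intro sum.cong refl) (simp add: eq_commute)
      also have "\<dots> = (\<Sum>j<m. \<Sum>i\<in>{..<m}-{j}. a j i)"
        by (simp only: fl)
      finally show ?thesis .
    qed
    have "(\<Sum>i<m. b i i + (\<Sum>j\<in>{..<m}-{i}. (a i j + a j i) / 2))
        = (\<Sum>i<m. b i i) + ((\<Sum>i<m. \<Sum>j\<in>{..<m}-{i}. a i j) + (\<Sum>i<m. \<Sum>j\<in>{..<m}-{i}. a j i)) / 2"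
      by (simp add: sum.distrib sum_divide_distrib add_divide_distrib)
    then show ?thesis using sw by simp
  qed
  also have "\<dots> \<le> (\<Sum>i<m. b i i) + (\<Sum>i<m. (real m - 2) * b i i)"
  proof (intro add_left_mono sum_mono)
    fix i assume i: "i \<in> {..<m}"
    define ks where "ks = filter (\<lambda>j. j \<noteq> i) [0..<m]"
    have ks: "distinct ks" "set ks = {..<m} - {i}" "length ks = m - 1"
    proof -
      show "distinct ks" by (simp add: ks_def)
      show "set ks = {..<m} - {i}" by (auto simp: ks_def)
      have "length ks = card (set ks)" using distinct_card[OF \<open>distinct ks\<close>] by simp
      also have "\<dots> = m - 1" using i by (simp add: \<open>set ks = {..<m} - {i}\<close>)
      finally show "length ks = m - 1" .
    qed
    have "(\<Sum>j\<in>set ks. a i j) \<le> (real (length ks) - 1) * (\<integral>x. (h i x)\<^sup>2 \<partial>\<Omega>) + (\<integral>x. h i x \<partial>\<Omega>)\<^sup>2"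
      unfolding a_def
    proof (rule ES[OF ks(1)])
      show "set ks \<subseteq> {..<m}" using ks by auto
      show "L2 \<Omega> (h i)" using L i by auto
      fix j assume "j \<notin> set ks"
      then have "j \<notin> {..<m} - {i}" using ks(2) by simp
      then have "j = i \<or> m \<le> j" by (simp add: not_less) blast
      then show "invar j (h i)" using I i by auto
    qed
    moreover have "real (length ks) - 1 = real m - 2" using ks(3) m2 by (simp add: of_nat_diff)
    moreover have "(\<integral>x. h i x \<partial>\<Omega>) = 0" using Z i by simp
    moreover have "b i i = (\<integral>x. (h i x)\<^sup>2 \<partial>\<Omega>)" by (simp add: b_def power2_eq_square)
    moreover have "(\<Sum>j\<in>{..<m}-{i}. a i j) = (\<Sum>j\<in>set ks. a i j)" by (simp only: ks(2))
    ultimately show "(\<Sum>j\<in>{..<m}-{i}. a i j) \<le> (real m - 2) * b i i"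
      by (simp only:) simp
  qed
  also have "\<dots> = (\<Sum>i<m. b i i) + (real m - 2) * (\<Sum>i<m. b i i)"
    by (simp add: sum_distrib_left)
  also have "\<dots> = real (m - 1) * (\<Sum>i<m. (\<integral>x. (h i x)\<^sup>2 \<partial>\<Omega>))"
    using m2 by (simp add: b_def power2_eq_square of_nat_diff algebra_simps)
  finally show ?thesis .
qed

end

lemma vec_nth_meas: "(\<lambda>x::real^'s. x $ j) \<in> borel_measurable borel"
  by (intro borel_measurable_continuous_onI linear_continuous_on bounded_linear_vec_nth)

lemma vec_nth_meas2: "f \<in> borel_measurable M \<Longrightarrow> (\<lambda>x. (f x :: real^'s) $ j) \<in> borel_measurable M"
  using measurable_compose[OF _ vec_nth_meas] by blast

lemma vimage_meas_const:
  fixes g :: "'b \<Rightarrow> real"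
  assumes g: "g \<in> borel_measurable (vimage_algebra X r N)" and r: "r \<in> X \<rightarrow> space N"
    and xy: "x \<in> X" "y \<in> X" "r x = r y"
  shows "g x = g y"
proof -
  have "g -` {g x} \<inter> X \<in> sets (vimage_algebra X r N)"
    using measurable_sets[OF g, of "{g x}"] by simp
  then obtain A where A: "A \<in> sets N" "g -` {g x} \<inter> X = r -` A \<inter> X"
    using sets_vimage_algebra2[OF r] by auto
  have "x \<in> r -` A \<inter> X" using A(2) xy by blast
  then have "y \<in> r -` A \<inter> X" using xy by simp
  then have "y \<in> g -` {g x} \<inter> X" using A(2) by blast
  then show ?thesis by simp
qed

locale pit =
  fixes F :: "(real^'s) measure"
  assumes F: "prob_space F" and sF: "sets F = sets borel" and iF: "integrable F (\<lambda>x. norm x ^ 2)"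
begin

definition P0 where "P0 = distr F borel (\<lambda>x. x + 0)"

lemma shift_meas: "(\<lambda>x. x + c) \<in> measurable F borel"
  by (simp add: measurable_cong_sets[OF sF refl])

lemma P0_prob: "prob_space P0"
  unfolding P0_def by (rule prob_space.prob_space_distr[OF F shift_meas])

lemma iidk: "iid P0" by (simp add: iid_def P0_prob)

lemma sP0: "sets P0 = sets borel" by (simp add: P0_def)

lemma S0: "sample_meas F 0 k = PiM {..<k} (\<lambda>_. P0)" by (simp add: sample_meas_def P0_def)

lemma coord_meas: "i < k \<Longrightarrow> (\<lambda>x. x i) \<in> borel_measurable (PiM {..<k} (\<lambda>_. P0))"
  using measurable_component_singleton[of i "{..<k}" "\<lambda>_. P0"]
  by (simp add: measurable_cong_sets[OF refl sP0])

lemma P0_sq: "integrable P0 (\<lambda>y. norm y ^ 2)"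
proof -
  have "integrable F (\<lambda>x. norm (x + 0) ^ 2)" using iF by simp
  then show ?thesis unfolding P0_def
    by (subst integrable_distr_eq[OF shift_meas]) simp_all
qed

lemma coord_sq: "i < k \<Longrightarrow> integrable (PiM {..<k} (\<lambda>_. P0)) (\<lambda>x. norm (x i) ^ 2)"
proof -
  assume i: "i < k"
  have d: "distr (PiM {..<k} (\<lambda>_. P0)) P0 (\<lambda>\<omega>. \<omega> i) = P0"
    by (rule distr_PiM_component) (simp_all add: P0_prob i)
  have "integrable (distr (PiM {..<k} (\<lambda>_. P0)) P0 (\<lambda>\<omega>. \<omega> i)) (\<lambda>y. norm y ^ 2)"
    using P0_sq d by simp
  moreover have "(\<lambda>y. norm y ^ 2) \<in> borel_measurable P0" by (simp add: measurable_cong_sets[OF sP0 refl])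
  ultimately show ?thesis
    by (subst (asm) integrable_distr_eq) (simp_all add: i)
qed

lemma coord_L2: "i < k \<Longrightarrow> L2 (PiM {..<k} (\<lambda>_. P0)) (\<lambda>x. x i $ j)"
proof -
  assume i: "i < k"
  have m: "(\<lambda>x. x i $ j) \<in> borel_measurable (PiM {..<k} (\<lambda>_. P0))"
    by (rule vec_nth_meas2[OF coord_meas[OF i]])
  have "integrable (PiM {..<k} (\<lambda>_. P0)) (\<lambda>x. (x i $ j)\<^sup>2)"
  proof (rule Bochner_Integration.integrable_bound[OF coord_sq[OF i]])
    show "(\<lambda>x. (x i $ j)\<^sup>2) \<in> borel_measurable (PiM {..<k} (\<lambda>_. P0))" using m by simp
    show "AE x in PiM {..<k} (\<lambda>_. P0). norm ((x i $ j)\<^sup>2) \<le> norm (norm (x i) ^ 2)"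
    proof (rule AE_I2)
      fix x
      have "\<bar>x i $ j\<bar> \<le> norm (x i)" by (rule component_le_norm_cart)
      then have "\<bar>x i $ j\<bar>\<^sup>2 \<le> (norm (x i))\<^sup>2" by (rule power_mono) simp
      then show "norm ((x i $ j)\<^sup>2) \<le> norm (norm (x i) ^ 2)" by simp
    qed
  qed
  then show ?thesis using m by (simp add: L2_def)
qed

lemma mean_comp: "sample_mean k x $ j = (1 / real k) * (\<Sum>i<k. x i $ j)"
  by (simp add: sample_mean_def sum_component)

lemma mean_L2: "L2 (PiM {..<k} (\<lambda>_. P0)) (\<lambda>x. sample_mean k x $ j)"
proof -
  have "L2 (PiM {..<k} (\<lambda>_. P0)) (\<lambda>x. (1 / real k) * (\<Sum>i<k. x i $ j))"
    by (intro L2_cmult L2_sum iid.finO[OF iidk] coord_L2) auto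
  then show ?thesis by (simp add: mean_comp)
qed

lemma mean_meas: "(\<lambda>x. sample_mean k x) \<in> borel_measurable (PiM {..<k} (\<lambda>_. P0))"
  unfolding sample_mean_def
  by (intro borel_measurable_scaleR borel_measurable_const borel_measurable_sum coord_meas) auto

lemma res_meas: "residuals k \<in> measurable (PiM {..<k} (\<lambda>_. P0)) (PiM {..<k} (\<lambda>_. borel))"
proof -
  have "(\<lambda>x. \<lambda>i\<in>{..<k}. x i - sample_mean k x) \<in> measurable (PiM {..<k} (\<lambda>_. P0)) (PiM {..<k} (\<lambda>_. borel))"
    by (intro measurable_restrict borel_measurable_diff coord_meas mean_meas) auto
  then show ?thesis by (simp add: residuals_def[abs_def])
qed

lemma res_space: "residuals k \<in> X \<rightarrow> space (PiM {..<k} (\<lambda>_. borel))"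
  by (auto simp: residuals_def space_PiM)

lemma RA: "residual_algebra F k = vimage_algebra (space (PiM {..<k} (\<lambda>_. P0))) (residuals k) (PiM {..<k} (\<lambda>_. borel))"
  by (simp add: residual_algebra_def S0)

lemma subalg: "subalgebra (PiM {..<k} (\<lambda>_. P0)) (residual_algebra F k)"
  unfolding subalgebra_def RA
  by (simp add: sets_image_in_sets[OF refl res_meas])

lemma sfs: "sigma_finite_subalgebra (PiM {..<k} (\<lambda>_. P0)) (residual_algebra F k)"
  by (rule finite_measure_subalgebra_is_sigma_finite)
     (simp add: finite_measure_subalgebra_def finite_measure_subalgebra_axioms_def subalg iid.finO[OF iidk])

lemma ce_L2:
  assumes "L2 (PiM {..<k} (\<lambda>_. P0)) f"
  shows "L2 (PiM {..<k} (\<lambda>_. P0)) (real_cond_exp (PiM {..<k} (\<lambda>_. P0)) (residual_algebra F k) f)"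
proof -
  interpret sigma_finite_subalgebra "PiM {..<k} (\<lambda>_. P0)" "residual_algebra F k" by (rule sfs)
  have i: "integrable (PiM {..<k} (\<lambda>_. P0)) f" by (rule L2_int[OF iid.finO[OF iidk] assms])
  have "integrable (PiM {..<k} (\<lambda>_. P0)) (\<lambda>x. (\<lambda>x. x\<^sup>2) (real_cond_exp (PiM {..<k} (\<lambda>_. P0)) (residual_algebra F k) f x))"
  proof (rule integrable_convex_cond_exp[where I=UNIV])
    show "integrable (PiM {..<k} (\<lambda>_. P0)) f" by (rule i)
    show "integrable (PiM {..<k} (\<lambda>_. P0)) (\<lambda>x. (f x)\<^sup>2)" using assms by (simp add: L2_def)
    show "convex_on UNIV (\<lambda>x::real. x\<^sup>2)" using convex_power2 by simp
  qed auto
  then show ?thesis by (simp add: L2_def)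
qed

end

lemma cov_quad:
  fixes t :: "'b \<Rightarrow> real^'s"
  assumes M: "prob_space M" and L: "\<And>i. L2 M (\<lambda>x. t x $ i)"
  shows "u \<bullet> (cov_matrix M t *v u) = (\<integral>x. (u \<bullet> t x - (\<integral>y. u \<bullet> t y \<partial>M))\<^sup>2 \<partial>M)"
proof -
  have fm: "finite_measure M" using M by (simp add: prob_space.finite_measure)
  define mu where "mu i = (\<integral>x. t x $ i \<partial>M)" for i
  define d where "d i x = t x $ i - mu i" for i x
  have dL: "L2 M (d i)" for i unfolding d_def by (intro L2_diff L L2_const fm)
  have ti: "integrable M (\<lambda>x. t x $ i)" for i by (rule L2_int[OF fm L])
  have e1: "u \<bullet> (cov_matrix M t *v u) = (\<Sum>i\<in>UNIV. \<Sum>j\<in>UNIV. u$i * u$j * (\<integral>x. d i x * d j x \<partial>M))"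
    by (simp add: inner_vec_def matrix_vector_mult_def cov_matrix_def d_def mu_def sum_distrib_left ac_simps)
  have e3: "(\<integral>y. u \<bullet> t y \<partial>M) = (\<Sum>i\<in>UNIV. u$i * mu i)"
  proof -
    have "(\<integral>y. u \<bullet> t y \<partial>M) = (\<integral>y. (\<Sum>i\<in>UNIV. u$i * t y $ i) \<partial>M)" by (simp add: inner_vec_def)
    also have "\<dots> = (\<Sum>i\<in>UNIV. (\<integral>y. u$i * t y $ i \<partial>M))"
      by (rule Bochner_Integration.integral_sum) (simp add: ti)
    also have "\<dots> = (\<Sum>i\<in>UNIV. u$i * mu i)" by (simp add: mu_def)
    finally show ?thesis .
  qed
  have e4: "u \<bullet> t x - (\<integral>y. u \<bullet> t y \<partial>M) = (\<Sum>i\<in>UNIV. u$i * d i x)" for x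
    by (simp only: e3) (simp add: inner_vec_def d_def right_diff_distrib sum_subtractf)
  have "(\<integral>x. (u \<bullet> t x - (\<integral>y. u \<bullet> t y \<partial>M))\<^sup>2 \<partial>M) = (\<integral>x. (\<Sum>i\<in>UNIV. \<Sum>j\<in>UNIV. u$i * u$j * (d i x * d j x)) \<partial>M)"
    by (simp add: e4 power2_eq_square sum_product ac_simps)
  also have "\<dots> = (\<Sum>i\<in>UNIV. (\<integral>x. (\<Sum>j\<in>UNIV. u$i * u$j * (d i x * d j x)) \<partial>M))"
    by (rule Bochner_Integration.integral_sum) (use L2_mult[OF dL dL] in auto)
  also have "\<dots> = (\<Sum>i\<in>UNIV. \<Sum>j\<in>UNIV. u$i * u$j * (\<integral>x. d i x * d j x \<partial>M))"
  proof (rule sum.cong[OF refl])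
    fix i
    have "(\<integral>x. (\<Sum>j\<in>UNIV. u$i * u$j * (d i x * d j x)) \<partial>M) = (\<Sum>j\<in>UNIV. (\<integral>x. u$i * u$j * (d i x * d j x) \<partial>M))"
      by (rule Bochner_Integration.integral_sum) (use L2_mult[OF dL dL] in auto)
    then show "(\<integral>x. (\<Sum>j\<in>UNIV. u$i * u$j * (d i x * d j x)) \<partial>M) = (\<Sum>j\<in>UNIV. u$i * u$j * (\<integral>x. d i x * d j x \<partial>M))"
      by simp
  qed
  finally show ?thesis using e1 by simp
qed

context pit
begin

lemma pit_comp: "pitman F k x $ j = sample_mean k x $ j - real_cond_exp (PiM {..<k} (\<lambda>_. P0)) (residual_algebra F k) (\<lambda>y. sample_mean k y $ j) x"
  by (simp add: pitman_def S0)

lemma pit_L2: "L2 (PiM {..<k} (\<lambda>_. P0)) (\<lambda>x. pitman F k x $ j)"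
  unfolding pit_comp by (intro L2_diff mean_L2 ce_L2)

lemma pit_shift:
  assumes k: "k \<ge> 1" and x: "x \<in> space (PiM {..<k} (\<lambda>_. P0))"
  shows "pitman F k (compose {..<k} (\<lambda>v. v + \<theta>) x) = pitman F k x + \<theta>"
proof -
  define y where "y = compose {..<k} (\<lambda>v. v + \<theta>) x"
  have xe: "x \<in> extensional {..<k}" using x by (simp add: space_PiM PiE_iff)
  have y: "y \<in> space (PiM {..<k} (\<lambda>_. P0))"
    using xe by (simp add: y_def compose_def space_PiM PiE_iff sP0 sets_eq_imp_space_eq[OF sP0])
  have ym: "sample_mean k y = sample_mean k x + \<theta>"
  proof -
    have "(\<Sum>i<k. y i) = (\<Sum>i<k. x i) + real k *\<^sub>R \<theta>"
      by (simp add: y_def compose_def sum.distrib del: sum_constant add: sum_constant_scaleR)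
    then show ?thesis using k by (simp add: sample_mean_def scaleR_add_right)
  qed
  have yr: "residuals k y = residuals k x"
    unfolding residuals_def ym by (rule restrict_ext) (simp add: y_def compose_def)
  have ce: "real_cond_exp (PiM {..<k} (\<lambda>_. P0)) (residual_algebra F k) f y
          = real_cond_exp (PiM {..<k} (\<lambda>_. P0)) (residual_algebra F k) f x" for f
  proof (rule vimage_meas_const[where r="residuals k" and N="PiM {..<k} (\<lambda>_. borel)"])
    show "residuals k \<in> space (PiM {..<k} (\<lambda>_. P0)) \<rightarrow> space (PiM {..<k} (\<lambda>_. borel))" by (rule res_space)
    show "y \<in> space (PiM {..<k} (\<lambda>_. P0))" by (rule y)
    show "x \<in> space (PiM {..<k} (\<lambda>_. P0))" by (rule x)
    show "residuals k y = residuals k x" by (rule yr)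
    show "real_cond_exp (PiM {..<k} (\<lambda>_. P0)) (residual_algebra F k) f
      \<in> borel_measurable (vimage_algebra (space (PiM {..<k} (\<lambda>_. P0))) (residuals k) (PiM {..<k} (\<lambda>_. borel)))"
      using borel_measurable_cond_exp[of "PiM {..<k} (\<lambda>_. P0)" "residual_algebra F k" f] by (simp add: RA)
  qed
  show ?thesis unfolding y_def[symmetric]
    by (simp add: vec_eq_iff pit_comp ym ce)
qed

lemma T_meas: "compose {..<k} (\<lambda>v. v + \<theta>) \<in> measurable (PiM {..<k} (\<lambda>_. P0)) (sample_meas F \<theta> k)"
proof -
  have "(\<lambda>x. \<lambda>i\<in>{..<k}. x i + \<theta>) \<in> measurable (PiM {..<k} (\<lambda>_. P0)) (PiM {..<k} (\<lambda>_. distr F borel (\<lambda>x. x + \<theta>)))"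
    by (intro measurable_restrict) (simp add: measurable_cong_sets[OF refl sets_distr] coord_meas borel_measurable_add)
  then show ?thesis by (simp add: compose_def[abs_def] sample_meas_def)
qed

lemma S_distr: "sample_meas F \<theta> k = distr (PiM {..<k} (\<lambda>_. P0)) (sample_meas F \<theta> k) (compose {..<k} (\<lambda>v. v + \<theta>))"
proof -
  define Pt where "Pt = distr F borel (\<lambda>x. x + \<theta>)"
  have Pt: "prob_space Pt" unfolding Pt_def by (rule prob_space.prob_space_distr[OF F shift_meas])
  have fm: "(\<lambda>v. v + \<theta>) \<in> measurable P0 Pt"
    by (simp add: Pt_def measurable_cong_sets[OF sP0 refl])
  have "distr (PiM {..<k} (\<lambda>_. P0)) (PiM {..<k} (\<lambda>_. Pt)) (compose {..<k} (\<lambda>v. v + \<theta>))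
      = PiM {..<k} (\<lambda>i. distr P0 Pt (\<lambda>v. v + \<theta>))"
    by (rule distr_PiM_finite_prob_space') (simp_all add: P0_prob Pt fm)
  also have "distr P0 Pt (\<lambda>v. v + \<theta>) = Pt"
  proof -
    have "distr P0 Pt (\<lambda>v. v + \<theta>) = distr F Pt ((\<lambda>v. v + \<theta>) \<circ> (\<lambda>x. x + 0))"
      unfolding P0_def by (rule distr_distr) (simp_all add: Pt_def shift_meas measurable_cong_sets[OF sF refl])
    also have "\<dots> = Pt" unfolding Pt_def by (rule distr_cong) simp_all
    finally show ?thesis .
  qed
  finally show ?thesis by (simp add: sample_meas_def Pt_def)
qed

lemma cov_shift:
  assumes k: "k \<ge> 1"
  shows "pitman_cov F \<theta> k = pitman_cov F 0 k"
proof -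
  let ?O = "PiM {..<k} (\<lambda>_. P0)"
  let ?S = "sample_meas F \<theta> k"
  let ?T = "compose {..<k} (\<lambda>v. v + \<theta>)"
  define p where "p i x = pitman F k x $ i" for i x
  have pL: "L2 ?O (p i)" for i unfolding p_def by (rule pit_L2)
  have sS: "sets ?S = sets ?O" unfolding sample_meas_def by (rule sets_PiM_cong) (simp_all add: sP0)
  have pm: "p i \<in> borel_measurable ?S" for i
    using L2_meas[OF pL[of i]] by (simp add: measurable_cong_sets[OF sS refl])
  have pi: "integrable ?O (p i)" for i by (rule L2_int[OF iid.finO[OF iidk] pL])
  have sh: "x \<in> space ?O \<Longrightarrow> p i (?T x) = p i x + \<theta> $ i" for i x
    by (simp add: p_def pit_shift[OF k])
  have pr: "prob_space ?O" by (rule iid.prob_Omega[OF iidk])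
  have int1: "(\<integral>x. p i x \<partial>?S) = (\<integral>x. p i x \<partial>?O) + \<theta> $ i" for i
  proof -
    have "(\<integral>x. p i x \<partial>?S) = (\<integral>x. p i x \<partial>(distr ?O ?S ?T))" by (subst S_distr) simp
    also have "\<dots> = (\<integral>x. p i (?T x) \<partial>?O)" by (rule integral_distr[OF T_meas pm])
    also have "\<dots> = (\<integral>x. p i x + \<theta> $ i \<partial>?O)" by (rule Bochner_Integration.integral_cong) (simp_all add: sh)
    also have "\<dots> = (\<integral>x. p i x \<partial>?O) + (\<integral>x. \<theta> $ i \<partial>?O)"
      by (rule Bochner_Integration.integral_add) (use pi finite_measure.integrable_const[OF prob_space.finite_measure[OF pr]] in auto)
    also have "(\<integral>x. \<theta> $ i \<partial>?O) = \<theta> $ i" using prob_space.prob_space[OF pr] by simp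
    finally show ?thesis .
  qed
  have "cov_matrix ?S (pitman F k) $ i $ j = cov_matrix ?O (pitman F k) $ i $ j" for i j
  proof -
    let ?g = "\<lambda>x. (p i x - (\<integral>y. p i y \<partial>?S)) * (p j x - (\<integral>y. p j y \<partial>?S))"
    have gm: "?g \<in> borel_measurable ?S" using pm by (intro borel_measurable_times borel_measurable_diff) auto
    have "cov_matrix ?S (pitman F k) $ i $ j = (\<integral>x. ?g x \<partial>?S)" by (simp add: cov_matrix_def p_def)
    also have "\<dots> = (\<integral>x. ?g x \<partial>(distr ?O ?S ?T))" by (subst S_distr) simp
    also have "\<dots> = (\<integral>x. ?g (?T x) \<partial>?O)" by (rule integral_distr[OF T_meas gm])
    also have "\<dots> = (\<integral>x. (p i x - (\<integral>y. p i y \<partial>?O)) * (p j x - (\<integral>y. p j y \<partial>?O)) \<partial>?O)"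
      by (rule Bochner_Integration.integral_cong) (simp_all add: sh int1)
    also have "\<dots> = cov_matrix ?O (pitman F k) $ i $ j" by (simp add: cov_matrix_def p_def)
    finally show ?thesis .
  qed
  then show ?thesis by (simp add: pitman_cov_def vec_eq_iff S0)
qed

end

definition var :: "'b measure \<Rightarrow> ('b \<Rightarrow> real) \<Rightarrow> real" where
  "var M f = (\<integral>x. (f x - (\<integral>y. f y \<partial>M))\<^sup>2 \<partial>M)"

lemma sq_split_gen:
  fixes a b :: "'b \<Rightarrow> real"
  assumes "L2 M a" "L2 M b"
  shows "(\<integral>x. (a x + b x)\<^sup>2 \<partial>M) = (\<integral>x. (a x)\<^sup>2 \<partial>M) + 2 * (\<integral>x. a x * b x \<partial>M) + (\<integral>x. (b x)\<^sup>2 \<partial>M)"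
proof -
  have i1: "integrable M (\<lambda>x. (a x)\<^sup>2)" "integrable M (\<lambda>x. (b x)\<^sup>2)" using assms by (simp_all add: L2_def)
  have i2: "integrable M (\<lambda>x. 2 * (a x * b x))" using L2_mult[OF assms] by simp
  have "(\<integral>x. (a x + b x)\<^sup>2 \<partial>M) = (\<integral>x. (a x)\<^sup>2 + 2 * (a x * b x) + (b x)\<^sup>2 \<partial>M)"
    by (simp add: power2_sum ac_simps)
  also have "\<dots> = (\<integral>x. (a x)\<^sup>2 \<partial>M) + (\<integral>x. 2 * (a x * b x) \<partial>M) + (\<integral>x. (b x)\<^sup>2 \<partial>M)"
    using i1 i2 by simp
  finally show ?thesis by simp
qed

lemma var_le_sq:
  assumes "prob_space M" "L2 M f"
  shows "var M f \<le> (\<integral>x. (f x)\<^sup>2 \<partial>M)"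
proof -
  have i: "integrable M f" by (rule L2_int[OF prob_space.finite_measure[OF assms(1)] assms(2)])
  have "var M f = (\<integral>x. (f x)\<^sup>2 \<partial>M) - (\<integral>x. f x \<partial>M)\<^sup>2"
    using prob_space.variance_eq[OF assms(1) i L2_sq[OF assms(2)]] by (simp add: var_def)
  then show ?thesis by simp
qed

lemma var_cong_AE:
  fixes f g :: "'b \<Rightarrow> real"
  assumes "f \<in> borel_measurable M" "g \<in> borel_measurable M" "AE x in M. f x = g x"
  shows "var M f = var M g"
proof -
  have e: "(\<integral>x. f x \<partial>M) = (\<integral>x. g x \<partial>M)" by (rule integral_cong_AE[OF assms])
  show ?thesis unfolding var_def e
    by (rule integral_cong_AE) (use assms in auto)
qed

context pit
begin

lemma opt:
  fixes X H :: "(nat \<Rightarrow> real^'s) \<Rightarrow> real"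
  assumes X: "L2 (PiM {..<k} (\<lambda>_. P0)) X" and H: "L2 (PiM {..<k} (\<lambda>_. P0)) H"
    and Hm: "H \<in> borel_measurable (residual_algebra F k)"
  shows "var (PiM {..<k} (\<lambda>_. P0)) (\<lambda>x. X x - real_cond_exp (PiM {..<k} (\<lambda>_. P0)) (residual_algebra F k) X x)
       \<le> var (PiM {..<k} (\<lambda>_. P0)) (\<lambda>x. X x - H x)"
proof -
  let ?M = "PiM {..<k} (\<lambda>_. P0)"
  let ?R = "residual_algebra F k"
  interpret S: sigma_finite_subalgebra ?M ?R by (rule sfs)
  have pr: "prob_space ?M" by (rule iid.prob_Omega[OF iidk])
  have fm: "finite_measure ?M" by (rule iid.finO[OF iidk])
  define C where "C = real_cond_exp ?M ?R X"
  have CL: "L2 ?M C" unfolding C_def by (rule ce_L2[OF X])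
  have Cm: "C \<in> borel_measurable ?R" unfolding C_def by simp
  define c where "c = (\<integral>x. X x - H x \<partial>?M)"
  define H' where "H' x = H x + c" for x
  have H'L: "L2 ?M H'" unfolding H'_def by (intro L2_add H L2_const fm)
  have H'm: "H' \<in> borel_measurable ?R" unfolding H'_def using Hm by simp
  define Z where "Z x = X x - C x" for x
  define W where "W x = C x - H' x" for x
  have ZL: "L2 ?M Z" unfolding Z_def by (rule L2_diff[OF X CL])
  have WL: "L2 ?M W" unfolding W_def by (rule L2_diff[OF CL H'L])
  have Wm: "W \<in> borel_measurable ?R" unfolding W_def using Cm H'm by simp
  have Xm: "X \<in> borel_measurable ?M" by (rule L2_meas[OF X])
  have cross: "(\<integral>x. Z x * W x \<partial>?M) = 0"
  proof -
    have a: "(\<integral>x. W x * C x \<partial>?M) = (\<integral>x. W x * X x \<partial>?M)"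
      unfolding C_def by (rule S.real_cond_exp_intg(2)[OF L2_mult[OF WL X] Wm Xm])
    have "(\<integral>x. Z x * W x \<partial>?M) = (\<integral>x. W x * X x - W x * C x \<partial>?M)"
      by (simp add: Z_def algebra_simps)
    also have "\<dots> = (\<integral>x. W x * X x \<partial>?M) - (\<integral>x. W x * C x \<partial>?M)"
      using L2_mult[OF WL X] L2_mult[OF WL CL] by simp
    finally show ?thesis using a by simp
  qed
  have "var ?M (\<lambda>x. X x - C x) \<le> (\<integral>x. (Z x)\<^sup>2 \<partial>?M)"
  proof -
    have Zeq: "Z = (\<lambda>x. X x - C x)" by (simp add: Z_def fun_eq_iff)
    show ?thesis using var_le_sq[OF pr ZL] unfolding Zeq .
  qed
  also have "\<dots> \<le> (\<integral>x. (Z x)\<^sup>2 \<partial>?M) + 2 * (\<integral>x. Z x * W x \<partial>?M) + (\<integral>x. (W x)\<^sup>2 \<partial>?M)"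
    using cross by simp
  also have "\<dots> = (\<integral>x. (Z x + W x)\<^sup>2 \<partial>?M)" by (rule sq_split_gen[OF ZL WL, symmetric])
  also have "\<dots> = var ?M (\<lambda>x. X x - H x)"
    by (simp add: var_def Z_def W_def H'_def c_def algebra_simps)
  finally show ?thesis by (simp add: C_def)
qed

lemma pit_var:
  "var (PiM {..<k} (\<lambda>_. P0)) (\<lambda>x. u \<bullet> pitman F k x)
   = var (PiM {..<k} (\<lambda>_. P0)) (\<lambda>x. u \<bullet> sample_mean k x - real_cond_exp (PiM {..<k} (\<lambda>_. P0)) (residual_algebra F k) (\<lambda>x. u \<bullet> sample_mean k x) x)"
proof -
  let ?M = "PiM {..<k} (\<lambda>_. P0)"
  let ?R = "residual_algebra F k"
  interpret S: sigma_finite_subalgebra ?M ?R by (rule sfs)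
  have fm: "finite_measure ?M" by (rule iid.finO[OF iidk])
  define ce where "ce j = real_cond_exp ?M ?R (\<lambda>y. sample_mean k y $ j)" for j
  have mi: "integrable ?M (\<lambda>y. u $ j * sample_mean k y $ j)" for j
    using L2_int[OF fm L2_cmult[OF mean_L2]] by blast
  have e1: "u \<bullet> pitman F k x = u \<bullet> sample_mean k x - (\<Sum>j\<in>UNIV. u $ j * ce j x)" for x
    by (simp add: inner_vec_def pit_comp ce_def right_diff_distrib sum_subtractf)
  have ae: "AE x in ?M. real_cond_exp ?M ?R (\<lambda>x. u \<bullet> sample_mean k x) x = (\<Sum>j\<in>UNIV. u $ j * ce j x)"
  proof -
    have "AE x in ?M. real_cond_exp ?M ?R (\<lambda>x. \<Sum>j\<in>UNIV. u $ j * sample_mean k x $ j) x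
        = (\<Sum>j\<in>UNIV. real_cond_exp ?M ?R (\<lambda>x. u $ j * sample_mean k x $ j) x)"
      by (rule S.real_cond_exp_sum) (rule mi)
    moreover have "AE x in ?M. \<forall>j\<in>UNIV. real_cond_exp ?M ?R (\<lambda>x. u $ j * sample_mean k x $ j) x = u $ j * ce j x"
      unfolding ce_def
      by (rule eventually_ball_finite) (auto intro: S.real_cond_exp_cmult L2_int[OF fm mean_L2])
    ultimately show ?thesis
      by eventually_elim (simp add: inner_vec_def)
  qed
  have m1: "(\<lambda>x. u \<bullet> pitman F k x) \<in> borel_measurable ?M"
    unfolding inner_vec_def using L2_meas[OF pit_L2] by (intro borel_measurable_sum borel_measurable_times) auto
  have mm: "(\<lambda>x. u \<bullet> sample_mean k x) \<in> borel_measurable ?M"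
    unfolding inner_vec_def using L2_meas[OF mean_L2] by (intro borel_measurable_sum borel_measurable_times) auto
  show ?thesis
  proof (rule var_cong_AE[OF m1])
    show "(\<lambda>x. u \<bullet> sample_mean k x - real_cond_exp ?M ?R (\<lambda>x. u \<bullet> sample_mean k x) x) \<in> borel_measurable ?M"
      using mm by simp
    show "AE x in ?M. u \<bullet> pitman F k x = u \<bullet> sample_mean k x - real_cond_exp ?M ?R (\<lambda>x. u \<bullet> sample_mean k x) x"
      using ae by eventually_elim (simp add: e1)
  qed
qed

end

definition idx :: "nat \<Rightarrow> nat \<Rightarrow> nat" where "idx i k = (if k < i then k else Suc k)"
definition del :: "nat \<Rightarrow> nat \<Rightarrow> (nat \<Rightarrow> 'b) \<Rightarrow> (nat \<Rightarrow> 'b)" where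
  "del n i x = (\<lambda>k\<in>{..<n}. x (idx i k))"

lemma idx_inj: "inj_on (idx i) {..<n}"
  by (auto simp: inj_on_def idx_def split: if_splits)

lemma idx_range: "i < Suc n \<Longrightarrow> idx i ` {..<n} = {..<Suc n} - {i}"
proof (intro set_eqI iffI)
  fix j assume "i < Suc n" "j \<in> idx i ` {..<n}" then show "j \<in> {..<Suc n} - {i}" by (auto simp: idx_def)
next
  fix j assume a: "i < Suc n" "j \<in> {..<Suc n} - {i}"
  show "j \<in> idx i ` {..<n}"
  proof (cases "j < i")
    case True then show ?thesis using a by (intro image_eqI[of _ _ j]) (auto simp: idx_def)
  next
    case False
    then obtain l where l: "j = Suc l" using a by (cases j) auto
    then show ?thesis using a False by (intro image_eqI[of _ _ l]) (auto simp: idx_def)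
  qed
qed

lemma idx_ne: "k < n \<Longrightarrow> idx i k \<noteq> i" by (simp add: idx_def)
lemma idx_lt: "k < n \<Longrightarrow> idx i k < Suc n" by (simp add: idx_def)

lemma del_invar: "j = i \<or> Suc n \<le> j \<Longrightarrow> del n i (x(j := y)) = del n i x"
  unfolding del_def using idx_ne idx_lt by (intro restrict_ext) (auto, metis not_less)

lemma sum_del: "i < Suc n \<Longrightarrow> (\<Sum>k<n. x (idx i k)) = (\<Sum>k<Suc n. x k) - (x i :: 'b::ab_group_add)"
proof -
  assume i: "i < Suc n"
  have "(\<Sum>k<n. x (idx i k)) = (\<Sum>k\<in>idx i ` {..<n}. x k)" by (rule sum.reindex[OF idx_inj, symmetric, unfolded comp_def])
  also have "\<dots> = (\<Sum>k\<in>{..<Suc n} - {i}. x k)" by (simp add: idx_range[OF i])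
  also have "\<dots> = (\<Sum>k<Suc n. x k) - x i" using i by (simp add: sum_diff1)
  finally show ?thesis .
qed

context pit
begin

lemma mean_del:
  assumes n: "n \<ge> 1" and i: "i < Suc n"
  shows "sample_mean n (del n i x) = sample_mean (Suc n) x - (1 / real n) *\<^sub>R (x i - sample_mean (Suc n) x)"
proof -
  have s: "(\<Sum>k<n. del n i x k) = (\<Sum>k<Suc n. x k) - x i"
    using sum_del[OF i, of x] by (simp add: del_def)
  show ?thesis
  proof (simp only: vec_eq_iff, intro allI)
    fix j
    define S where "S = (\<Sum>k<Suc n. x k $ j)"
    have "sample_mean n (del n i x) $ j = (S - x i $ j) / real n"
      using s by (simp add: sample_mean_def S_def sum_component)
    moreover have "(sample_mean (Suc n) x - (1 / real n) *\<^sub>R (x i - sample_mean (Suc n) x)) $ j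
       = S / real (Suc n) - (x i $ j - S / real (Suc n)) / real n"
      by (simp add: sample_mean_def S_def sum_component)
    moreover have "(S - x i $ j) / real n = S / real (Suc n) - (x i $ j - S / real (Suc n)) / real n"
    proof -
      define N where "N = real n"
      have N: "N \<noteq> 0" "N + 1 \<noteq> 0" using n by (simp_all add: N_def)
      have "S / (N + 1) - (x i $ j - S / (N + 1)) / N = (S - x i $ j) / N"
        using N by (simp add: divide_simps) (simp add: algebra_simps)
      then show ?thesis by (simp add: N_def add.commute)
    qed
    ultimately show "sample_mean n (del n i x) $ j = (sample_mean (Suc n) x - (1 / real n) *\<^sub>R (x i - sample_mean (Suc n) x)) $ j"
      by simp
  qed
qed

definition Lmap :: "nat \<Rightarrow> nat \<Rightarrow> (nat \<Rightarrow> real^'s) \<Rightarrow> (nat \<Rightarrow> real^'s)" where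
  "Lmap n i r = (\<lambda>k\<in>{..<n}. r (idx i k) + (1 / real n) *\<^sub>R r i)"

lemma res_del:
  assumes n: "n \<ge> 1" and i: "i < Suc n"
  shows "residuals n (del n i x) = Lmap n i (residuals (Suc n) x)"
  unfolding residuals_def Lmap_def mean_del[OF n i]
  by (rule restrict_ext) (simp add: del_def idx_lt i algebra_simps)

lemma Lmap_meas: "i < Suc n \<Longrightarrow> Lmap n i \<in> measurable (PiM {..<Suc n} (\<lambda>_. borel)) (PiM {..<n} (\<lambda>_. borel))"
  unfolding Lmap_def
  by (intro measurable_restrict borel_measurable_add borel_measurable_scaleR borel_measurable_const
      measurable_component_singleton) (auto simp: idx_lt)

lemma del_meas: "i < Suc n \<Longrightarrow> del n i \<in> measurable (PiM {..<Suc n} (\<lambda>_. P0)) (PiM {..<n} (\<lambda>_. P0))"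
  unfolding del_def
  by (intro measurable_restrict measurable_component_singleton) (auto simp: idx_lt)

lemma del_distr: "i < Suc n \<Longrightarrow> distr (PiM {..<Suc n} (\<lambda>_. P0)) (PiM {..<n} (\<lambda>_. P0)) (del n i) = PiM {..<n} (\<lambda>_. P0)"
  unfolding del_def
  using distr_PiM_reindex[of "{..<Suc n}" "\<lambda>_. P0" "idx i" "{..<n}"]
  by (simp add: P0_prob idx_inj idx_lt Pi_iff)

lemma del_space: "i < Suc n \<Longrightarrow> del n i \<in> space (PiM {..<Suc n} (\<lambda>_. P0)) \<rightarrow> space (PiM {..<n} (\<lambda>_. P0))"
  using measurable_space[OF del_meas] by blast

lemma res_R_meas: "residuals k \<in> measurable (residual_algebra F k) (PiM {..<k} (\<lambda>_. borel))"
  unfolding RA by (rule measurable_vimage_algebra1[OF res_space])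

lemma del_R_meas:
  assumes n: "n \<ge> 1" and i: "i < Suc n"
  shows "del n i \<in> measurable (residual_algebra F (Suc n)) (residual_algebra F n)"
proof -
  have "del n i \<in> measurable (residual_algebra F (Suc n))
      (vimage_algebra (space (PiM {..<n} (\<lambda>_. P0))) (residuals n) (PiM {..<n} (\<lambda>_. borel)))"
  proof (rule measurable_vimage_algebra2)
    show "del n i \<in> space (residual_algebra F (Suc n)) \<rightarrow> space (PiM {..<n} (\<lambda>_. P0))"
      using del_space[OF i] by (simp add: RA)
    have "(\<lambda>x. Lmap n i (residuals (Suc n) x)) \<in> measurable (residual_algebra F (Suc n)) (PiM {..<n} (\<lambda>_. borel))"
      by (rule measurable_compose[OF res_R_meas Lmap_meas[OF i]])
    then show "(\<lambda>x. residuals n (del n i x)) \<in> measurable (residual_algebra F (Suc n)) (PiM {..<n} (\<lambda>_. borel))"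
      by (simp add: res_del[OF n i])
  qed
  then show ?thesis by (simp add: RA)
qed

end

lemma inner_L2:
  fixes t :: "'b \<Rightarrow> real^'s"
  assumes "finite_measure M" "\<And>j. L2 M (\<lambda>x. t x $ j)"
  shows "L2 M (\<lambda>x. u \<bullet> t x)"
  unfolding inner_vec_def inner_real_def by (intro L2_sum L2_cmult assms)

context pit
begin

lemma main_q:
  assumes n: "n \<ge> 1"
  shows "real (Suc n) * var (PiM {..<Suc n} (\<lambda>_. P0)) (\<lambda>x. u \<bullet> pitman F (Suc n) x)
       \<le> real n * var (PiM {..<n} (\<lambda>_. P0)) (\<lambda>y. u \<bullet> pitman F n y)"
proof -
  let ?Om = "PiM {..<Suc n} (\<lambda>_. P0)"
  let ?On = "PiM {..<n} (\<lambda>_. P0)"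
  let ?R = "residual_algebra F (Suc n)"
  have fmm: "finite_measure ?Om" by (rule iid.finO[OF iidk])
  have fmn: "finite_measure ?On" by (rule iid.finO[OF iidk])
  have prm: "prob_space ?Om" by (rule iid.prob_Omega[OF iidk])
  have prn: "prob_space ?On" by (rule iid.prob_Omega[OF iidk])
  define \<psi> where "\<psi> y = u \<bullet> pitman F n y" for y
  have \<psi>L: "L2 ?On \<psi>" unfolding \<psi>_def by (rule inner_L2[OF fmn pit_L2])
  have \<psi>m: "\<psi> \<in> borel_measurable ?On" by (rule L2_meas[OF \<psi>L])
  define \<mu> where "\<mu> = (\<integral>y. \<psi> y \<partial>?On)"
  have cL: "L2 ?Om (\<lambda>x. \<psi> (del n i x))" if i: "i < Suc n" for i
  proof -
    have m: "(\<lambda>x. \<psi> (del n i x)) \<in> borel_measurable ?Om" by (rule measurable_compose[OF del_meas[OF i] \<psi>m])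
    have "integrable (distr ?Om ?On (del n i)) (\<lambda>y. (\<psi> y)\<^sup>2)" using L2_sq[OF \<psi>L] by (simp add: del_distr[OF i])
    then have "integrable ?Om (\<lambda>x. (\<psi> (del n i x))\<^sup>2)"
      by (subst (asm) integrable_distr_eq[OF del_meas[OF i]]) (use \<psi>m in simp_all)
    then show ?thesis using m by (simp add: L2_def)
  qed
  have cint: "(\<integral>x. \<psi> (del n i x) \<partial>?Om) = \<mu>" if i: "i < Suc n" for i
  proof -
    have "(\<integral>x. \<psi> (del n i x) \<partial>?Om) = (\<integral>y. \<psi> y \<partial>(distr ?Om ?On (del n i)))"
      by (rule integral_distr[OF del_meas[OF i] \<psi>m, symmetric])
    then show ?thesis by (simp add: del_distr[OF i] \<mu>_def)
  qed
  have csq: "(\<integral>x. (\<psi> (del n i x) - \<mu>)\<^sup>2 \<partial>?Om) = var ?On \<psi>" if i: "i < Suc n" for i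
  proof -
    have "(\<integral>x. (\<psi> (del n i x) - \<mu>)\<^sup>2 \<partial>?Om) = (\<integral>y. (\<psi> y - \<mu>)\<^sup>2 \<partial>(distr ?Om ?On (del n i)))"
      by (rule integral_distr[OF del_meas[OF i], symmetric]) (use \<psi>m in simp)
    then show ?thesis by (simp add: del_distr[OF i] \<mu>_def var_def)
  qed
  define h where "h i x = \<psi> (del n i x) - \<mu>" for i x
  have hL: "L2 ?Om (h i)" if "i < Suc n" for i unfolding h_def by (intro L2_diff cL that L2_const fmm)
  have vd: "(\<integral>x. (\<Sum>i<Suc n. h i x)\<^sup>2 \<partial>?Om) \<le> real (Suc n - 1) * (\<Sum>i<Suc n. (\<integral>x. (h i x)\<^sup>2 \<partial>?Om))"
  proof (rule iid.vdrop[OF iidk])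
    show "2 \<le> Suc n" using n by simp
    show "L2 ?Om (h i)" if "i < Suc n" for i by (rule hL[OF that])
    show "(\<integral>x. h i x \<partial>?Om) = 0" if i: "i < Suc n" for i
    proof -
      have "(\<integral>x. h i x \<partial>?Om) = (\<integral>x. \<psi> (del n i x) \<partial>?Om) - (\<integral>x. \<mu> \<partial>?Om)"
        unfolding h_def
        by (rule Bochner_Integration.integral_diff) (use L2_int[OF fmm cL[OF i]] finite_measure.integrable_const[OF fmm] in auto)
      then show ?thesis using cint[OF i] prob_space.prob_space[OF prm] by simp
    qed
    show "iid.invar j (h i)" if "i < Suc n" "j = i \<or> Suc n \<le> j" for i j
      by (simp add: iid.invar_def[OF iidk] h_def del_invar[OF that(2)])
  qed
  have sumh: "(\<Sum>i<Suc n. (\<integral>x. (h i x)\<^sup>2 \<partial>?Om)) = real (Suc n) * var ?On \<psi>"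
    by (simp add: h_def csq)
  define T where "T x = (1 / real (Suc n)) * (\<Sum>i<Suc n. \<psi> (del n i x))" for x
  have TL: "L2 ?Om T" unfolding T_def by (intro L2_cmult L2_sum fmm cL) auto
  have Tint: "(\<integral>x. T x \<partial>?Om) = \<mu>"
  proof -
    have "(\<integral>x. T x \<partial>?Om) = (1 / real (Suc n)) * (\<Sum>i<Suc n. (\<integral>x. \<psi> (del n i x) \<partial>?Om))"
      unfolding T_def
      by (subst Bochner_Integration.integral_sum[symmetric]) (use L2_int[OF fmm cL] in auto)
    also have "\<dots> = \<mu>" by (simp add: cint)
    finally show ?thesis .
  qed
  have varT: "var ?Om T = (1 / real (Suc n))\<^sup>2 * (\<integral>x. (\<Sum>i<Suc n. h i x)\<^sup>2 \<partial>?Om)"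
  proof -
    have eq: "T x - \<mu> = (1 / real (Suc n)) * (\<Sum>i<Suc n. h i x)" for x
      by (simp add: T_def h_def sum_subtractf field_simps)
    have e: "(T x - \<mu>)\<^sup>2 = (1 / real (Suc n))\<^sup>2 * (\<Sum>i<Suc n. h i x)\<^sup>2" for x
      by (simp only: eq power_mult_distrib)
    show ?thesis by (simp only: var_def Tint e integral_mult_right_zero)
  qed
  define X where "X x = u \<bullet> sample_mean (Suc n) x" for x
  have XL: "L2 ?Om X" unfolding X_def by (rule inner_L2[OF fmm mean_L2])
  define ce where "ce j = real_cond_exp ?On (residual_algebra F n) (\<lambda>y. sample_mean n y $ j)" for j
  define H where "H x = (1 / real (Suc n)) * (\<Sum>i<Suc n. (1 / real n) * (u \<bullet> residuals (Suc n) x i)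
                      + (\<Sum>j\<in>UNIV. u $ j * ce j (del n i x)))" for x
  have XTH: "X x - T x = H x" for x
  proof -
    have one: "X x - \<psi> (del n i x) = (1 / real n) * (u \<bullet> residuals (Suc n) x i) + (\<Sum>j\<in>UNIV. u $ j * ce j (del n i x))"
      if i: "i < Suc n" for i
    proof -
      have a: "\<psi> (del n i x) = u \<bullet> sample_mean n (del n i x) - (\<Sum>j\<in>UNIV. u $ j * ce j (del n i x))"
        by (simp add: \<psi>_def inner_vec_def pit_comp ce_def right_diff_distrib sum_subtractf)
      have b: "u \<bullet> sample_mean n (del n i x) = X x - (1 / real n) * (u \<bullet> (x i - sample_mean (Suc n) x))"
        by (simp add: mean_del[OF n i] X_def inner_diff_right)
      have c: "residuals (Suc n) x i = x i - sample_mean (Suc n) x" using i by (simp add: residuals_def)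
      show ?thesis using a b c by simp
    qed
    have "X x - T x = (1 / real (Suc n)) * (\<Sum>i<Suc n. X x - \<psi> (del n i x))"
      by (simp add: T_def sum_subtractf field_simps)
    also have "\<dots> = H x" unfolding H_def by (simp add: one)
    finally show ?thesis .
  qed
  have Hm: "H \<in> borel_measurable ?R"
  proof -
    have r: "(\<lambda>x. residuals (Suc n) x i) \<in> borel_measurable ?R" if "i < Suc n" for i
      by (rule measurable_compose[OF res_R_meas measurable_component_singleton]) (use that in simp)
    have c: "(\<lambda>x. ce j (del n i x)) \<in> borel_measurable ?R" if "i < Suc n" for i j
      unfolding ce_def by (rule measurable_compose[OF del_R_meas[OF n that] borel_measurable_cond_exp])
    show ?thesis unfolding H_def
      by (intro borel_measurable_times borel_measurable_const borel_measurable_sum borel_measurable_add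
          borel_measurable_inner r c) auto
  qed
  have HL: "L2 ?Om H" by (rule L2_cong[OF L2_diff[OF XL TL]]) (simp add: XTH)
  have "var ?Om (\<lambda>x. u \<bullet> pitman F (Suc n) x) = var ?Om (\<lambda>x. X x - real_cond_exp ?Om ?R X x)"
    unfolding X_def by (rule pit_var)
  also have "\<dots> \<le> var ?Om (\<lambda>x. X x - H x)" by (rule opt[OF XL HL Hm])
  also have "(\<lambda>x. X x - H x) = T" using XTH by (auto simp: fun_eq_iff algebra_simps)
  finally have A: "var ?Om (\<lambda>x. u \<bullet> pitman F (Suc n) x) \<le> var ?Om T" .
  have "var ?Om T \<le> (1 / real (Suc n))\<^sup>2 * (real (Suc n - 1) * (real (Suc n) * var ?On \<psi>))"
    unfolding varT using vd sumh by (intro mult_left_mono) simp_all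
  also have "\<dots> = real n / real (Suc n) * var ?On \<psi>"
  proof -
    have mnz: "real (Suc n) \<noteq> 0" by simp
    show ?thesis using mnz by (simp add: power2_eq_square divide_simps)
  qed
  finally have B: "var ?Om T \<le> real n / real (Suc n) * var ?On \<psi>" .
  have "real (Suc n) * var ?Om (\<lambda>x. u \<bullet> pitman F (Suc n) x) \<le> real (Suc n) * (real n / real (Suc n) * var ?On \<psi>)"
    using A B by (intro mult_left_mono) simp_all
  also have "\<dots> = real n * var ?On \<psi>" by simp
  finally show ?thesis by (simp add: \<psi>_def[abs_def])
qed

end

context pit
begin

lemma quad:
  assumes k: "k \<ge> 1"
  shows "u \<bullet> (pitman_cov F \<theta> k *v u) = var (PiM {..<k} (\<lambda>_. P0)) (\<lambda>x. u \<bullet> pitman F k x)"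
proof -
  have "u \<bullet> (pitman_cov F \<theta> k *v u) = u \<bullet> (cov_matrix (PiM {..<k} (\<lambda>_. P0)) (pitman F k) *v u)"
    by (subst cov_shift[OF k]) (simp add: pitman_cov_def S0)
  also have "\<dots> = var (PiM {..<k} (\<lambda>_. P0)) (\<lambda>x. u \<bullet> pitman F k x)"
    unfolding var_def by (rule cov_quad[OF iid.prob_Omega[OF iidk] pit_L2])
  finally show ?thesis .
qed

end

theorem mainTheorem13:
  fixes F :: "(real^'s) measure" and \<theta> :: "real^'s" and n :: nat
  assumes "prob_space F"
    and "sets F = sets borel"
    and "integrable F (\<lambda>x. norm x ^ 2)"
    and "n \<ge> 1"
  shows "nonneg_definite (real n *\<^sub>R pitman_cov F \<theta> n - real (n + 1) *\<^sub>R pitman_cov F \<theta> (n + 1))"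
proof -
  interpret pit F by (rule pit.intro) (rule assms)+
  show ?thesis
    unfolding nonneg_definite_def
  proof
    fix u :: "real^'s"
    have e: "u \<bullet> ((real n *\<^sub>R pitman_cov F \<theta> n - real (n + 1) *\<^sub>R pitman_cov F \<theta> (n + 1)) *v u)
      = real n * (u \<bullet> (pitman_cov F \<theta> n *v u)) - real (n + 1) * (u \<bullet> (pitman_cov F \<theta> (n + 1) *v u))"
      by (simp add: matrix_vector_mult_diff_rdistrib scaleR_matrix_vector_assoc[symmetric] inner_diff_right)
    have "real (Suc n) * var (PiM {..<Suc n} (\<lambda>_. P0)) (\<lambda>x. u \<bullet> pitman F (Suc n) x)
       \<le> real n * var (PiM {..<n} (\<lambda>_. P0)) (\<lambda>y. u \<bullet> pitman F n y)"
      by (rule main_q[OF assms(4)])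
    then show "0 \<le> u \<bullet> ((real n *\<^sub>R pitman_cov F \<theta> n - real (n + 1) *\<^sub>R pitman_cov F \<theta> (n + 1)) *v u)"
      unfolding e using quad[OF assms(4), of u \<theta>] quad[of "n + 1" u \<theta>] by simp
  qed
qed

end
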